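(* Let $d=s_c+s_e+s_3$ with block sizes $s_c,s_e,s_3\ge 0$, let $A_1\in\mathbb{R}^{s_c\times s_c}$, $A_{12}\in\mathbb{R}^{s_c\times s_e}$, $A_2\in\mathbb{R}^{s_e\times s_e}$, $A_{32},\bar A_{32}\in\mathbb{R}^{s_3\times s_e}$, $A_3,\bar A_3\in\mathbb{R}^{s_3\times s_3}$, $B_1\in\mathbb{R}^{s_c\times d_u}$, and set $$A=\begin{bmatrix}A_1&A_{12}&0\\0&A_2&0\\0&A_{32}&A_3\end{bmatrix},\quad \bar A=\begin{bmatrix}A_1&A_{12}&0\\0&A_2&0\\0&\bar A_{32}&\bar A_3\end{bmatrix},\quad B=\begin{bmatrix}B_1\\0\\0\end{bmatrix}.$$ (1) Let $I_{1+}\in\mathbb{R}^{d\times d}$ be a diagonal matrix with $I_{1+}(i,i)=1$ for every coordinate $i$ of the first block and $I_{1+}(i,i)\in\{0,1\}$ for every other coordinate $i$. If $L_1=(A,B,I_d)$ and $L_2=(A,B,I_{1+})$ are stabilizable, then $K^*(L_1)=K^*(L_2)$. (2) If $L_1=(A,B,I_d)$ and $L_2=(\bar A,B,I_d)$ are stabilizable, then $K^*(L_1)=K^*(L_2)$.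
   Context: An LQ system $L=(A,B,Q)$ has state $x_t\in\mathbb{R}^d$, input $u_t\in\mathbb{R}^{d_u}$ and dynamics $x_{t+1}=Ax_t+Bu_t+\xi_t$, where the $\xi_t$ are i.i.d. zero-mean noise vectors. The cost is $\mathbb{E}\big[\sum_{t\ge1}x_t^\top Qx_t+u_t^\top u_t\big]$ (input cost matrix $R=I_{d_u}$), with $Q\succeq0$. The system is stabilizable if there is $K\in\mathbb{R}^{d_u\times d}$ with $\rho(A+BK)<1$, where $\rho$ is the spectral radius. $K^*(L)$ denotes the optimal controller of $L$, i.e. the linear state-feedback gain $K$ such that the policy $u_t=Kx_t$ minimizes the cost. An LQ system whose matrices have the three-block form above is called a partially controllable LQ (PC-LQ). *)

theory Defs
  imports "Jordan_Normal_Form.Spectral_Radius"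
begin

definition closed_loop :: "real mat \<Rightarrow> real mat \<Rightarrow> real mat \<Rightarrow> real mat" where
  "closed_loop A B K = A + B * K"

definition stabilizing :: "real mat \<Rightarrow> real mat \<Rightarrow> real mat \<Rightarrow> bool" where
  "stabilizing A B K \<longleftrightarrow> K \<in> carrier_mat (dim_col B) (dim_row A) \<and>
     spectral_radius (map_mat complex_of_real (closed_loop A B K)) < 1"

definition stabilizable :: "real mat \<Rightarrow> real mat \<Rightarrow> bool" where
  "stabilizable A B \<longleftrightarrow> (\<exists>K. stabilizing A B K)"

(* The expected (average) cost
   of the noisy system under i.i.d. zero-mean noise is determined by this quadratic form. *)
definition lq_cost :: "real mat \<Rightarrow> real mat \<Rightarrow> real mat \<Rightarrow> real mat \<Rightarrow> real vec \<Rightarrow> real" where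
  "lq_cost A B Q K x =
     (\<Sum>t. let y = (closed_loop A B K ^\<^sub>m t) *\<^sub>v x in y \<bullet> (Q *\<^sub>v y) + (K *\<^sub>v y) \<bullet> (K *\<^sub>v y))"

definition optimal_gain :: "real mat \<Rightarrow> real mat \<Rightarrow> real mat \<Rightarrow> real mat \<Rightarrow> bool" where
  "optimal_gain A B Q K \<longleftrightarrow> stabilizing A B K \<and>
     (\<forall>K'. stabilizing A B K' \<longrightarrow>
        (\<forall>x \<in> carrier_vec (dim_row A). lq_cost A B Q K x \<le> lq_cost A B Q K' x))"

definition Kstar :: "real mat \<Rightarrow> real mat \<Rightarrow> real mat \<Rightarrow> real mat" where
  "Kstar A B Q = (THE K. optimal_gain A B Q K)"

definition pc_A :: "nat \<Rightarrow> nat \<Rightarrow> nat \<Rightarrow> real mat \<Rightarrow> real mat \<Rightarrow> real mat \<Rightarrow> real mat \<Rightarrow> real mat \<Rightarrow> real mat" where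
  "pc_A sc se s3 A1 A12 A2 A32 A3 = mat (sc + se + s3) (sc + se + s3) (\<lambda>(i, j).
     if i < sc then
       (if j < sc then A1 $$ (i, j) else if j < sc + se then A12 $$ (i, j - sc) else 0)
     else if i < sc + se then
       (if sc \<le> j \<and> j < sc + se then A2 $$ (i - sc, j - sc) else 0)
     else
       (if j < sc then 0 else if j < sc + se then A32 $$ (i - sc - se, j - sc)
        else A3 $$ (i - sc - se, j - sc - se)))"

definition pc_B :: "nat \<Rightarrow> nat \<Rightarrow> nat \<Rightarrow> nat \<Rightarrow> real mat \<Rightarrow> real mat" where
  "pc_B sc se s3 du B1 = mat (sc + se + s3) du (\<lambda>(i, j). if i < sc then B1 $$ (i, j) else 0)"

end

theory Submission
  imports Defs
begin


lemma smult_pow_mat: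
  fixes X :: "'a::comm_ring_1 mat"
  assumes "X \<in> carrier_mat n n"
  shows "(c \<cdot>\<^sub>m X) ^\<^sub>m k = (c ^ k) \<cdot>\<^sub>m (X ^\<^sub>m k)"
proof (induction k)
  case 0
  then show ?case using assms by (auto intro!: eq_matI)
next
  case (Suc k)
  have "(c \<cdot>\<^sub>m X) ^\<^sub>m Suc k = (c ^ k \<cdot>\<^sub>m X ^\<^sub>m k) * (c \<cdot>\<^sub>m X)" using Suc by simp
  also have "\<dots> = c ^ k \<cdot>\<^sub>m (X ^\<^sub>m k * (c \<cdot>\<^sub>m X))"
    using assms by (metis mult_smult_assoc_mat pow_carrier_mat smult_carrier_mat)
  also have "\<dots> = c ^ k \<cdot>\<^sub>m (c \<cdot>\<^sub>m (X ^\<^sub>m k * X))"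
    using assms by (metis mult_smult_distrib pow_carrier_mat)
  also have "\<dots> = c ^ Suc k \<cdot>\<^sub>m X ^\<^sub>m Suc k"
    by (intro eq_matI, auto simp: mult.commute)
  finally show ?case .
qed

lemma spectral_radius_nonneg:
  assumes "X \<in> carrier_mat n n" "n > 0"
  shows "spectral_radius X \<ge> 0"
  using spectral_radius_mem_max(1)[OF assms] by auto

lemma stable_entry_bound:
  fixes M :: "real mat"
  assumes M: "M \<in> carrier_mat n n" and n: "n > 0"
    and sr: "spectral_radius (map_mat complex_of_real M) < 1"
  shows "\<exists>c r. 0 \<le> r \<and> r < 1 \<and> (\<forall>k i j. i < n \<longrightarrow> j < n \<longrightarrow> \<bar>(M ^\<^sub>m k) $$ (i,j)\<bar> \<le> c * r ^ k)"
proof -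
  let ?Mc = "map_mat complex_of_real M"
  define \<rho> where "\<rho> = spectral_radius ?Mc"
  have Mc: "?Mc \<in> carrier_mat n n" using M by auto
  have r0: "\<rho> \<ge> 0" unfolding \<rho>_def using spectral_radius_nonneg[OF Mc n] .
  define r where "r = (1 + \<rho>) / 2"
  have rpos: "r > 0" and r1: "r < 1" and \<rho>r: "\<rho> < r" using r0 sr unfolding r_def \<rho>_def by auto
  define N where "N = map_mat complex_of_real ((1/r) \<cdot>\<^sub>m M)"
  have N: "N \<in> carrier_mat n n" unfolding N_def using M by auto
  have N_eq: "N = complex_of_real (1/r) \<cdot>\<^sub>m ?Mc" unfolding N_def by (intro eq_matI, auto)
  have "spectral_radius N < 1"
  proof -
    from spectral_radius_mem_max(1)[OF N n] obtain \<mu> where mu: "\<mu> \<in> spectrum N"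
      and eq: "spectral_radius N = norm \<mu>" by auto
    from mu obtain v where ev: "eigenvector N v \<mu>" unfolding spectrum_def eigenvalue_def by auto
    hence v: "v \<in> carrier_vec n" "v \<noteq> 0\<^sub>v n" and Nv: "N *\<^sub>v v = \<mu> \<cdot>\<^sub>v v"
      unfolding eigenvector_def using N by auto
    have "?Mc *\<^sub>v v = (complex_of_real r * \<mu>) \<cdot>\<^sub>v v"
    proof (rule eq_vecI)
      fix i assume i: "i < dim_vec ((complex_of_real r * \<mu>) \<cdot>\<^sub>v v)"
      hence i': "i < n" using v by auto
      have "(N *\<^sub>v v) $ i = complex_of_real (1/r) * (?Mc *\<^sub>v v) $ i"
        unfolding N_eq using i' Mc v
        by (simp add: scalar_prod_def sum_distrib_left mult.assoc)
      hence "complex_of_real (1/r) * (?Mc *\<^sub>v v) $ i = \<mu> * v $ i" using Nv i' v by simp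
      moreover have "complex_of_real r * complex_of_real (1/r) = 1" using rpos
        by (simp flip: of_real_mult)
      ultimately have "(?Mc *\<^sub>v v) $ i = complex_of_real r * (\<mu> * v $ i)"
        by (metis mult.assoc mult_1)
      thus "(?Mc *\<^sub>v v) $ i = ((complex_of_real r * \<mu>) \<cdot>\<^sub>v v) $ i" using i' v by simp
    qed (insert Mc v, auto)
    hence "eigenvector ?Mc v (complex_of_real r * \<mu>)" unfolding eigenvector_def using v Mc by auto
    hence "complex_of_real r * \<mu> \<in> spectrum ?Mc" unfolding spectrum_def eigenvalue_def by auto
    from spectral_radius_mem_max(2)[OF Mc n imageI[OF this]]
    have "r * norm \<mu> \<le> \<rho>" unfolding \<rho>_def using rpos by (simp add: norm_mult)
    hence "r * norm \<mu> < r * 1" using \<rho>r by simp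
    hence "norm \<mu> < 1" using rpos by (simp only: mult_less_cancel_left_pos)
    thus ?thesis using eq by simp
  qed
  from spectral_radius_jnf_norm_bound_less_1_upper_triangular[OF N this]
  obtain c where c: "\<And>k. norm_bound (N ^\<^sub>m k) c" by auto
  have "\<forall>k i j. i < n \<longrightarrow> j < n \<longrightarrow> \<bar>(M ^\<^sub>m k) $$ (i,j)\<bar> \<le> c * r ^ k"
  proof (intro allI impI)
    fix k i j assume i: "i < n" and j: "j < n"
    have "N ^\<^sub>m k = map_mat complex_of_real (((1/r) \<cdot>\<^sub>m M) ^\<^sub>m k)"
      unfolding N_def by (rule of_real_hom.mat_hom_pow[symmetric], insert M, auto)
    also have "\<dots> = map_mat complex_of_real ((1/r)^k \<cdot>\<^sub>m (M ^\<^sub>m k))"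
      using smult_pow_mat[OF M] by simp
    finally have "(N ^\<^sub>m k) $$ (i,j) = complex_of_real ((1/r)^k * (M ^\<^sub>m k) $$ (i,j))"
      using i j M by simp
    moreover have "norm ((N ^\<^sub>m k) $$ (i,j)) \<le> c" using c[of k] i j N
      unfolding norm_bound_def by auto
    ultimately have "\<bar>(1/r)^k * (M ^\<^sub>m k) $$ (i,j)\<bar> \<le> c" by (metis norm_of_real)
    hence "\<bar>(M ^\<^sub>m k) $$ (i,j)\<bar> / r^k \<le> c" using rpos by (simp add: abs_mult power_divide)
    thus "\<bar>(M ^\<^sub>m k) $$ (i,j)\<bar> \<le> c * r ^ k" using rpos by (simp add: divide_le_eq)
  qed
  thus ?thesis using rpos r1 by (intro exI[of _ c] exI[of _ r], auto)
qed


definition gdec :: "(nat \<Rightarrow> real) \<Rightarrow> bool" where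
  "gdec f \<longleftrightarrow> (\<exists>c r. 0 \<le> r \<and> r < 1 \<and> (\<forall>t. \<bar>f t\<bar> \<le> c * r ^ t))"

lemma gdecI: "0 \<le> r \<Longrightarrow> r < 1 \<Longrightarrow> (\<And>t. \<bar>f t\<bar> \<le> c * r ^ t) \<Longrightarrow> gdec f"
  unfolding gdec_def by blast

lemma gdecE:
  assumes "gdec f"
  obtains c r where "0 \<le> c" "0 \<le> r" "r < 1" "\<And>t. \<bar>f t\<bar> \<le> c * r ^ t"
proof -
  from assms obtain c r where r: "0 \<le> r" "r < 1" and b: "\<And>t. \<bar>f t\<bar> \<le> c * r ^ t"
    unfolding gdec_def by blast
  have "0 \<le> c" using b[of 0] by simp
  thus ?thesis using that r b by blast
qed

lemma gdec_zero[simp]: "gdec (\<lambda>t. 0)"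
  by (rule gdecI[of 0 _ 0], auto)

lemma gdec_add:
  assumes "gdec f" "gdec g" shows "gdec (\<lambda>t. f t + g t)"
proof -
  obtain c1 r1 where 1: "0 \<le> c1" "0 \<le> r1" "r1 < 1" "\<And>t. \<bar>f t\<bar> \<le> c1 * r1 ^ t"
    using gdecE[OF assms(1)] by blast
  obtain c2 r2 where 2: "0 \<le> c2" "0 \<le> r2" "r2 < 1" "\<And>t. \<bar>g t\<bar> \<le> c2 * r2 ^ t"
    using gdecE[OF assms(2)] by blast
  define r where "r = max r1 r2"
  show ?thesis
  proof (rule gdecI[of r])
    fix t
    have "c1 * r1 ^ t \<le> c1 * r ^ t" using 1 2 unfolding r_def
      by (intro mult_left_mono power_mono, auto)
    moreover have "c2 * r2 ^ t \<le> c2 * r ^ t" using 1 2 unfolding r_def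
      by (intro mult_left_mono power_mono, auto)
    ultimately show "\<bar>f t + g t\<bar> \<le> (c1 + c2) * r ^ t" using 1(4)[of t] 2(4)[of t]
      by (simp add: distrib_right)
  qed (insert 1 2, auto simp: r_def)
qed

lemma gdec_cmult: assumes "gdec f" shows "gdec (\<lambda>t. a * f t)"
proof -
  obtain c r where 1: "0 \<le> c" "0 \<le> r" "r < 1" "\<And>t. \<bar>f t\<bar> \<le> c * r ^ t"
    using gdecE[OF assms] by blast
  show ?thesis
  proof (rule gdecI[of r])
    fix t show "\<bar>a * f t\<bar> \<le> (\<bar>a\<bar> * c) * r ^ t"
      using 1(4)[of t] by (simp add: abs_mult mult.assoc mult_left_mono)
  qed (insert 1, auto)
qed

lemma gdec_uminus: assumes "gdec f" shows "gdec (\<lambda>t. - f t)"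
  using gdec_cmult[OF assms, of "-1"] by simp

lemma gdec_diff: assumes "gdec f" "gdec g" shows "gdec (\<lambda>t. f t - g t)"
  using gdec_add[OF assms(1) gdec_uminus[OF assms(2)]] by simp

lemma gdec_mult:
  assumes "gdec f" "gdec g" shows "gdec (\<lambda>t. f t * g t)"
proof -
  obtain c1 r1 where 1: "0 \<le> c1" "0 \<le> r1" "r1 < 1" "\<And>t. \<bar>f t\<bar> \<le> c1 * r1 ^ t"
    using gdecE[OF assms(1)] by blast
  obtain c2 r2 where 2: "0 \<le> c2" "0 \<le> r2" "r2 < 1" "\<And>t. \<bar>g t\<bar> \<le> c2 * r2 ^ t"
    using gdecE[OF assms(2)] by blast
  show ?thesis
  proof (rule gdecI[of "r1 * r2"])
    fix t
    have "\<bar>f t * g t\<bar> \<le> (c1 * r1 ^ t) * (c2 * r2 ^ t)"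
      unfolding abs_mult using 1 2 by (intro mult_mono, auto)
    thus "\<bar>f t * g t\<bar> \<le> (c1 * c2) * (r1 * r2) ^ t" by (simp add: power_mult_distrib ac_simps)
  next
    have "r1 * r2 \<le> r1 * 1" using 1 2 by (intro mult_left_mono, auto)
    thus "r1 * r2 < 1" using 1 by simp
  qed (insert 1 2, auto)
qed

lemma gdec_sum:
  assumes "finite S" "\<And>i. i \<in> S \<Longrightarrow> gdec (f i)" shows "gdec (\<lambda>t. \<Sum>i\<in>S. f i t)"
  using assms by (induction S rule: finite_induct, auto intro: gdec_add)

lemma gdec_summable: assumes "gdec f" shows "summable f"
proof -
  obtain c r where 1: "0 \<le> c" "0 \<le> r" "r < 1" "\<And>t. \<bar>f t\<bar> \<le> c * r ^ t"
    using gdecE[OF assms] by blast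
  have "summable (\<lambda>t. c * r ^ t)" using 1 by (intro summable_mult summable_geometric, auto)
  thus ?thesis by (rule summable_comparison_test[rotated], insert 1(4), auto)
qed

lemma gdec_tendsto: assumes "gdec f" shows "f \<longlonglongrightarrow> 0"
  using summable_LIMSEQ_zero[OF gdec_summable[OF assms]] .

lemma gdec_Suc: assumes "gdec f" shows "gdec (\<lambda>t. f (Suc t))"
proof -
  obtain c r where 1: "0 \<le> c" "0 \<le> r" "r < 1" "\<And>t. \<bar>f t\<bar> \<le> c * r ^ t"
    using gdecE[OF assms] by blast
  show ?thesis
  proof (rule gdecI[of r])
    fix t
    have "c * r ^ Suc t = (c * r ^ t) * r" by simp
    also have "\<dots> \<le> (c * r ^ t) * 1" using 1 by (intro mult_left_mono, auto)
    finally show "\<bar>f (Suc t)\<bar> \<le> c * r ^ t" using 1(4)[of "Suc t"] by simp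
  qed (insert 1, auto)
qed

definition vdec :: "nat \<Rightarrow> (nat \<Rightarrow> real vec) \<Rightarrow> bool" where
  "vdec n y \<longleftrightarrow> (\<forall>t. y t \<in> carrier_vec n) \<and> (\<forall>i<n. gdec (\<lambda>t. y t $ i))"

lemma vdec_dim: "vdec n y \<Longrightarrow> dim_vec (y t) = n"
  unfolding vdec_def by auto

lemma vdec_carrier: "vdec n y \<Longrightarrow> y t \<in> carrier_vec n"
  unfolding vdec_def by auto

lemma vdec_mult:
  assumes X: "X \<in> carrier_mat m n" and y: "vdec n y"
  shows "vdec m (\<lambda>t. X *\<^sub>v y t)"
  unfolding vdec_def
proof (intro conjI allI impI)
  fix t show "X *\<^sub>v y t \<in> carrier_vec m" using X y unfolding vdec_def by auto
next
  fix i assume i: "i < m"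
  have "gdec (\<lambda>t. \<Sum>j\<in>{0..<n}. X $$ (i,j) * y t $ j)"
    using y unfolding vdec_def by (intro gdec_sum gdec_cmult, auto)
  moreover have "(X *\<^sub>v y t) $ i = (\<Sum>j\<in>{0..<n}. X $$ (i,j) * y t $ j)" for t
    using X y i vdec_dim[OF y] by (auto simp: scalar_prod_def)
  ultimately show "gdec (\<lambda>t. (X *\<^sub>v y t) $ i)" by simp
qed

lemma vdec_scalar:
  assumes y: "vdec n y" and z: "vdec n z"
  shows "gdec (\<lambda>t. y t \<bullet> z t)"
proof -
  have "gdec (\<lambda>t. \<Sum>j\<in>{0..<n}. y t $ j * z t $ j)"
    using y z unfolding vdec_def by (intro gdec_sum gdec_mult, auto)
  moreover have "y t \<bullet> z t = (\<Sum>j\<in>{0..<n}. y t $ j * z t $ j)" for t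
    using vdec_dim[OF z] by (auto simp: scalar_prod_def)
  ultimately show ?thesis by simp
qed

lemma vdec_add:
  assumes y: "vdec n y" and z: "vdec n z"
  shows "vdec n (\<lambda>t. y t + z t)"
proof -
  have "(y t + z t) $ i = y t $ i + z t $ i" if "i < n" for t i
    using that vdec_dim[OF z, of t] by simp
  thus ?thesis using assms unfolding vdec_def by (auto intro!: gdec_add)
qed

lemma vdec_diff:
  assumes y: "vdec n y" and z: "vdec n z"
  shows "vdec n (\<lambda>t. y t - z t)"
proof -
  have "(y t - z t) $ i = y t $ i - z t $ i" if "i < n" for t i
    using that vdec_dim[OF z, of t] by simp
  thus ?thesis using assms unfolding vdec_def by (auto intro!: gdec_diff)
qed

lemma vdec_tendsto:
  assumes "vdec n y" "i < n" shows "(\<lambda>t. y t $ i) \<longlonglongrightarrow> 0"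
  using assms unfolding vdec_def by (auto intro: gdec_tendsto)

lemma stable_vdec:
  fixes M :: "real mat"
  assumes M: "M \<in> carrier_mat n n"
    and sr: "n > 0 \<Longrightarrow> spectral_radius (map_mat complex_of_real M) < 1"
    and x: "x \<in> carrier_vec n"
  shows "vdec n (\<lambda>t. (M ^\<^sub>m t) *\<^sub>v x)"
  unfolding vdec_def
proof (cases "n = 0")
  case True thus "(\<forall>t. M ^\<^sub>m t *\<^sub>v x \<in> carrier_vec n) \<and> (\<forall>i<n. gdec (\<lambda>t. (M ^\<^sub>m t *\<^sub>v x) $ i))"
    using M x by (metis less_nat_zero_code mult_mat_vec_carrier pow_carrier_mat)
next
  case False
  hence n: "n > 0" by simp
  show "(\<forall>t. M ^\<^sub>m t *\<^sub>v x \<in> carrier_vec n) \<and> (\<forall>i<n. gdec (\<lambda>t. (M ^\<^sub>m t *\<^sub>v x) $ i))"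
proof (intro conjI allI impI)
  fix t show "M ^\<^sub>m t *\<^sub>v x \<in> carrier_vec n" using M x by (metis mult_mat_vec_carrier pow_carrier_mat)
next
  fix i assume i: "i < n"
  obtain c r where r: "0 \<le> r" "r < 1" and b: "\<And>k i j. i < n \<Longrightarrow> j < n \<Longrightarrow> \<bar>(M ^\<^sub>m k) $$ (i,j)\<bar> \<le> c * r ^ k"
    using stable_entry_bound[OF M n sr[OF n]] by blast
  have "gdec (\<lambda>t. \<Sum>j\<in>{0..<n}. x $ j * (M ^\<^sub>m t) $$ (i,j))"
  proof (intro gdec_sum gdec_cmult)
    fix j assume "j \<in> {0..<n}"
    thus "gdec (\<lambda>t. (M ^\<^sub>m t) $$ (i,j))" using b[OF i] r by (intro gdecI[of r], auto)
  qed auto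
  moreover have "(M ^\<^sub>m t *\<^sub>v x) $ i = (\<Sum>j\<in>{0..<n}. x $ j * (M ^\<^sub>m t) $$ (i,j))" for t
    using M x i by (auto simp: scalar_prod_def mult.commute)
  ultimately show "gdec (\<lambda>t. (M ^\<^sub>m t *\<^sub>v x) $ i)" by simp
qed
qed

lemma decay_stable:
  fixes M :: "real mat"
  assumes M: "M \<in> carrier_mat n n" and n: "n > 0"
    and dec: "\<And>x i. x \<in> carrier_vec n \<Longrightarrow> i < n \<Longrightarrow> (\<lambda>t. ((M ^\<^sub>m t) *\<^sub>v x) $ i) \<longlonglongrightarrow> 0"
  shows "spectral_radius (map_mat complex_of_real M) < 1"
proof (rule ccontr)
  let ?Mc = "map_mat complex_of_real M"
  have Mc: "?Mc \<in> carrier_mat n n" using M by auto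
  assume "\<not> ?thesis"
  hence ge: "spectral_radius ?Mc \<ge> 1" by simp
  from spectral_radius_mem_max(1)[OF Mc n] obtain \<mu> where mu: "\<mu> \<in> spectrum ?Mc"
    and eq: "spectral_radius ?Mc = norm \<mu>" by auto
  from mu obtain v where ev: "eigenvector ?Mc v \<mu>" unfolding spectrum_def eigenvalue_def by auto
  hence v: "v \<in> carrier_vec n" "v \<noteq> 0\<^sub>v n" unfolding eigenvector_def using Mc by auto
  then obtain i where i: "i < n" and vi: "v $ i \<noteq> 0" by (metis eq_vecI index_zero_vec carrier_vecD)
  define a where "a = vec n (\<lambda>j. Re (v $ j))"
  define b where "b = vec n (\<lambda>j. Im (v $ j))"
  have a: "a \<in> carrier_vec n" and b: "b \<in> carrier_vec n" unfolding a_def b_def by auto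
  have key: "(?Mc ^\<^sub>m t *\<^sub>v v) $ i = complex_of_real ((M ^\<^sub>m t *\<^sub>v a) $ i) + \<i> * complex_of_real ((M ^\<^sub>m t *\<^sub>v b) $ i)" for t
  proof -
    have "?Mc ^\<^sub>m t = map_mat complex_of_real (M ^\<^sub>m t)"
      by (rule of_real_hom.mat_hom_pow[symmetric], rule M)
    hence "(?Mc ^\<^sub>m t *\<^sub>v v) $ i = (\<Sum>j = 0..<n. complex_of_real ((M ^\<^sub>m t) $$ (i,j)) * v $ j)"
      using M v i by (simp add: scalar_prod_def)
    also have "\<dots> = (\<Sum>j = 0..<n. complex_of_real ((M ^\<^sub>m t) $$ (i,j) * Re (v $ j)) + \<i> * complex_of_real ((M ^\<^sub>m t) $$ (i,j) * Im (v $ j)))"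
      by (intro sum.cong refl, simp add: complex_eq_iff)
    also have "\<dots> = complex_of_real ((M ^\<^sub>m t *\<^sub>v a) $ i) + \<i> * complex_of_real ((M ^\<^sub>m t *\<^sub>v b) $ i)"
      using M i unfolding a_def b_def
      by (simp add: scalar_prod_def sum.distrib sum_distrib_left)
    finally show ?thesis .
  qed
  have la: "(\<lambda>t. complex_of_real ((M ^\<^sub>m t *\<^sub>v a) $ i)) \<longlonglongrightarrow> 0"
    using tendsto_of_real[OF dec[OF a i]] by simp
  have lb: "(\<lambda>t. complex_of_real ((M ^\<^sub>m t *\<^sub>v b) $ i)) \<longlonglongrightarrow> 0"
    using tendsto_of_real[OF dec[OF b i]] by simp
  have "(\<lambda>t. complex_of_real ((M ^\<^sub>m t *\<^sub>v a) $ i) + \<i> * complex_of_real ((M ^\<^sub>m t *\<^sub>v b) $ i)) \<longlonglongrightarrow> 0 + \<i> * 0"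
    by (intro tendsto_add tendsto_mult tendsto_const la lb)
  hence lim: "(\<lambda>t. (?Mc ^\<^sub>m t *\<^sub>v v) $ i) \<longlonglongrightarrow> 0" unfolding key by simp
  have "(?Mc ^\<^sub>m t *\<^sub>v v) $ i = \<mu> ^ t * v $ i" for t
    using eigenvector_pow[OF Mc ev, of t] i v by simp
  hence nrm: "norm ((?Mc ^\<^sub>m t *\<^sub>v v) $ i) \<ge> norm (v $ i)" for t
    using ge eq by (simp add: norm_mult norm_power one_le_power mult_le_cancel_right1)
  from lim have "eventually (\<lambda>t. norm ((?Mc ^\<^sub>m t *\<^sub>v v) $ i) < norm (v $ i)) sequentially"
    using vi by (simp add: tendsto_iff dist_norm) 
  then obtain N where "\<forall>t\<ge>N. norm ((?Mc ^\<^sub>m t *\<^sub>v v) $ i) < norm (v $ i)" 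
    unfolding eventually_sequentially by blast
  hence "norm ((?Mc ^\<^sub>m N *\<^sub>v v) $ i) < norm (v $ i)" by blast
  with nrm[of N] show False by simp
qed


lemma pow_vec_carrier[simp, intro]:
  "A \<in> carrier_mat n n \<Longrightarrow> x \<in> carrier_vec n \<Longrightarrow> A ^\<^sub>m t *\<^sub>v x \<in> carrier_vec n"
  by (metis mult_mat_vec_carrier pow_carrier_mat)

lemma pow_mat_commute:
  assumes A: "(A :: 'a::semiring_1 mat) \<in> carrier_mat n n"
  shows "A ^\<^sub>m t * A = A * A ^\<^sub>m t"
proof (induction t)
  case 0 thus ?case using A by simp
next
  case (Suc t)
  have "A ^\<^sub>m Suc t * A = (A ^\<^sub>m t * A) * A" by simp
  also have "\<dots> = (A * A ^\<^sub>m t) * A" using Suc by simp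
  also have "\<dots> = A * (A ^\<^sub>m t * A)" using A by (simp add: assoc_mult_mat[of _ n n _ n _ n])
  also have "\<dots> = A * A ^\<^sub>m Suc t" by simp
  finally show ?case .
qed

lemma pow_Suc_vec:
  assumes A: "(A :: 'a::semiring_1 mat) \<in> carrier_mat n n" and x: "x \<in> carrier_vec n"
  shows "A ^\<^sub>m Suc t *\<^sub>v x = A *\<^sub>v (A ^\<^sub>m t *\<^sub>v x)"
proof -
  have "A ^\<^sub>m Suc t = A * A ^\<^sub>m t" using pow_mat_commute[OF A, of t] by simp
  thus ?thesis using A x by (simp add: assoc_mult_mat_vec[of _ n n _ n])
qed

lemma mat_vec_low:
  assumes A: "(A :: real mat) \<in> carrier_mat n n" and w: "w \<in> carrier_vec n" and w': "w' \<in> carrier_vec n"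
    and Az: "\<And>i j. m \<le> i \<Longrightarrow> i < n \<Longrightarrow> j < m \<Longrightarrow> A $$ (i,j) = 0"
    and ag: "\<And>j. m \<le> j \<Longrightarrow> j < n \<Longrightarrow> w $ j = w' $ j"
    and i: "m \<le> i" "i < n"
  shows "(A *\<^sub>v w) $ i = (A *\<^sub>v w') $ i"
proof -
  have "(A *\<^sub>v w) $ i = (\<Sum>j = 0..<n. A $$ (i,j) * w $ j)" using A w i by (simp add: scalar_prod_def)
  also have "\<dots> = (\<Sum>j = 0..<n. A $$ (i,j) * w' $ j)"
  proof (intro sum.cong refl)
    fix j assume "j \<in> {0..<n}"
    thus "A $$ (i,j) * w $ j = A $$ (i,j) * w' $ j" using Az[OF i] ag by (cases "j < m", auto)
  qed
  also have "\<dots> = (A *\<^sub>v w') $ i" using A w' i by (simp add: scalar_prod_def)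
  finally show ?thesis .
qed

lemma mat_vec_up:
  assumes A: "(A :: real mat) \<in> carrier_mat n n" and A': "A' \<in> carrier_mat n n"
    and w: "w \<in> carrier_vec n" and w': "w' \<in> carrier_vec n"
    and Az: "\<And>j. m \<le> j \<Longrightarrow> j < n \<Longrightarrow> A $$ (i,j) = 0"
    and AA': "\<And>j. j < n \<Longrightarrow> A $$ (i,j) = A' $$ (i,j)"
    and ag: "\<And>j. j < m \<Longrightarrow> w $ j = w' $ j"
    and i: "i < n"
  shows "(A *\<^sub>v w) $ i = (A' *\<^sub>v w') $ i"
proof -
  have "(A *\<^sub>v w) $ i = (\<Sum>j = 0..<n. A $$ (i,j) * w $ j)" using A w i by (simp add: scalar_prod_def)
  also have "\<dots> = (\<Sum>j = 0..<n. A' $$ (i,j) * w' $ j)"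
  proof (intro sum.cong refl)
    fix j assume "j \<in> {0..<n}"
    thus "A $$ (i,j) * w $ j = A' $$ (i,j) * w' $ j" using Az AA' ag by (cases "j < m", auto)
  qed
  also have "\<dots> = (A' *\<^sub>v w') $ i" using A' w' i by (simp add: scalar_prod_def)
  finally show ?thesis .
qed

lemma traj_low:
  fixes A B :: "real mat"
  assumes A: "A \<in> carrier_mat n n" and B: "B \<in> carrier_mat n k"
    and Az: "\<And>i j. m \<le> i \<Longrightarrow> i < n \<Longrightarrow> j < m \<Longrightarrow> A $$ (i,j) = 0"
    and Bz: "\<And>i j. m \<le> i \<Longrightarrow> i < n \<Longrightarrow> j < k \<Longrightarrow> B $$ (i,j) = 0"
    and w: "\<And>t. w t \<in> carrier_vec n" and u: "\<And>t. u t \<in> carrier_vec k"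
    and ws: "\<And>t. w (Suc t) = A *\<^sub>v w t + B *\<^sub>v u t"
    and x: "x \<in> carrier_vec n" and w0: "\<And>j. m \<le> j \<Longrightarrow> j < n \<Longrightarrow> w 0 $ j = x $ j"
  shows "m \<le> i \<Longrightarrow> i < n \<Longrightarrow> w t $ i = (A ^\<^sub>m t *\<^sub>v x) $ i"
proof (induction t arbitrary: i)
  case 0 thus ?case using w0 x A by simp
next
  case (Suc t)
  have Bu: "(B *\<^sub>v u t) $ i = 0" using B u[of t] Suc.prems Bz by (simp add: scalar_prod_def)
  have "w (Suc t) $ i = (A *\<^sub>v w t) $ i" using ws[of t] Bu Suc.prems A B w[of t] by simp
  also have "\<dots> = (A *\<^sub>v (A ^\<^sub>m t *\<^sub>v x)) $ i"
    by (rule mat_vec_low[OF A w _ Az], insert Suc A x, auto)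
  also have "\<dots> = (A ^\<^sub>m Suc t *\<^sub>v x) $ i" using pow_Suc_vec[OF A x] by simp
  finally show ?case .
qed

lemma traj_up:
  fixes A A' B :: "real mat"
  assumes A: "A \<in> carrier_mat n n" and A': "A' \<in> carrier_mat n n" and B: "B \<in> carrier_mat n k"
    and Az: "\<And>i j. i < m \<Longrightarrow> m \<le> j \<Longrightarrow> j < n \<Longrightarrow> A $$ (i,j) = 0"
    and AA': "\<And>i j. i < m \<Longrightarrow> j < n \<Longrightarrow> A $$ (i,j) = A' $$ (i,j)"
    and m: "m \<le> n"
    and w: "\<And>t. w t \<in> carrier_vec n" and u: "\<And>t. u t \<in> carrier_vec k"
    and ws: "\<And>t. w (Suc t) = A *\<^sub>v w t + B *\<^sub>v u t"
    and w': "\<And>t. w' t \<in> carrier_vec n" and u': "\<And>t. u' t \<in> carrier_vec k"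
    and ws': "\<And>t. w' (Suc t) = A' *\<^sub>v w' t + B *\<^sub>v u' t"
    and uu: "\<And>t. (\<forall>j<m. w t $ j = w' t $ j) \<Longrightarrow> u t = u' t"
    and w0: "\<And>j. j < m \<Longrightarrow> w 0 $ j = w' 0 $ j"
  shows "\<forall>j<m. w t $ j = w' t $ j"
proof (induction t)
  case 0 thus ?case using w0 by simp
next
  case (Suc t)
  have u_eq: "u t = u' t" using uu Suc by blast
  show ?case
  proof (intro allI impI)
    fix i assume i: "i < m"
    have "w (Suc t) $ i = (A *\<^sub>v w t) $ i + (B *\<^sub>v u t) $ i" using ws[of t] i m A B w[of t] by simp
    also have "(A *\<^sub>v w t) $ i = (A' *\<^sub>v w' t) $ i"
      by (rule mat_vec_up[OF A A' w w' _ _ _], insert Az AA' Suc i m, auto)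
    also have "(A' *\<^sub>v w' t) $ i + (B *\<^sub>v u t) $ i = w' (Suc t) $ i"
      using ws'[of t] i m A' B w'[of t] u_eq by simp
    finally show "w (Suc t) $ i = w' (Suc t) $ i" .
  qed
qed


definition cterm :: "real mat \<Rightarrow> real mat \<Rightarrow> real vec \<Rightarrow> real" where
  "cterm Q K y = y \<bullet> (Q *\<^sub>v y) + (K *\<^sub>v y) \<bullet> (K *\<^sub>v y)"

lemma lq_cost_alt: "lq_cost A B Q K x = (\<Sum>t. cterm Q K (closed_loop A B K ^\<^sub>m t *\<^sub>v x))"
  unfolding lq_cost_def cterm_def Let_def by simp

lemma closed_loop_carrier:
  "A \<in> carrier_mat n n \<Longrightarrow> B \<in> carrier_mat n k \<Longrightarrow> K \<in> carrier_mat k n \<Longrightarrow> closed_loop A B K \<in> carrier_mat n n"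
  unfolding closed_loop_def by auto

lemma closed_loop_step:
  assumes A: "A \<in> carrier_mat n n" and B: "B \<in> carrier_mat n k" and K: "K \<in> carrier_mat k n"
    and x: "x \<in> carrier_vec n"
  shows "closed_loop A B K ^\<^sub>m Suc t *\<^sub>v x = A *\<^sub>v (closed_loop A B K ^\<^sub>m t *\<^sub>v x) + B *\<^sub>v (K *\<^sub>v (closed_loop A B K ^\<^sub>m t *\<^sub>v x))"
proof -
  have M: "closed_loop A B K \<in> carrier_mat n n" using closed_loop_carrier[OF A B K] .
  define y where "y = closed_loop A B K ^\<^sub>m t *\<^sub>v x"
  have y: "y \<in> carrier_vec n" unfolding y_def using M x by auto
  have "closed_loop A B K ^\<^sub>m Suc t *\<^sub>v x = (A + B * K) *\<^sub>v y"
    unfolding y_def using pow_Suc_vec[OF M x] unfolding closed_loop_def by simp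
  also have "\<dots> = A *\<^sub>v y + (B * K) *\<^sub>v y" using A B K y by (simp add: add_mult_distrib_mat_vec)
  also have "(B * K) *\<^sub>v y = B *\<^sub>v (K *\<^sub>v y)" using B K y by (simp add: assoc_mult_mat_vec[of _ n k _ n])
  finally show ?thesis unfolding y_def .
qed

lemma stabilizing_vdec:
  assumes A: "A \<in> carrier_mat n n" and B: "B \<in> carrier_mat n k" and st: "stabilizing A B K"
    and x: "x \<in> carrier_vec n"
  shows "vdec n (\<lambda>t. closed_loop A B K ^\<^sub>m t *\<^sub>v x)"
proof -
  have K: "K \<in> carrier_mat k n" using st A B unfolding stabilizing_def by auto
  show ?thesis
    by (rule stable_vdec[OF closed_loop_carrier[OF A B K] _ x], insert st, auto simp: stabilizing_def)
qed

lemma cterm_gdec: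
  assumes y: "vdec n y" and Q: "Q \<in> carrier_mat n n" and K: "K \<in> carrier_mat k n"
  shows "gdec (\<lambda>t. cterm Q K (y t))"
  unfolding cterm_def
  by (intro gdec_add vdec_scalar[of n] vdec_mult[OF Q y] y vdec_scalar[of k] vdec_mult[OF K y])

lemma pcA_carrier: "pc_A sc se s3 A1 A12 A2 A32 A3 \<in> carrier_mat (sc+se+s3) (sc+se+s3)"
  unfolding pc_A_def by auto

lemma pcB_carrier: "pc_B sc se s3 du B1 \<in> carrier_mat (sc+se+s3) du"
  unfolding pc_B_def by auto

lemma pcA_low: "sc \<le> i \<Longrightarrow> i < sc+se+s3 \<Longrightarrow> j < sc \<Longrightarrow> pc_A sc se s3 A1 A12 A2 A32 A3 $$ (i,j) = 0"
  unfolding pc_A_def by auto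

lemma pcB_low: "sc \<le> i \<Longrightarrow> i < sc+se+s3 \<Longrightarrow> j < du \<Longrightarrow> pc_B sc se s3 du B1 $$ (i,j) = 0"
  unfolding pc_B_def by auto

lemma pcA_up: "i < sc+se \<Longrightarrow> sc+se \<le> j \<Longrightarrow> j < sc+se+s3 \<Longrightarrow> pc_A sc se s3 A1 A12 A2 A32 A3 $$ (i,j) = 0"
  unfolding pc_A_def by auto

lemma pcA_agree: "i < sc+se \<Longrightarrow> j < sc+se+s3 \<Longrightarrow>
   pc_A sc se s3 A1 A12 A2 A32 A3 $$ (i,j) = pc_A sc se s3 A1 A12 A2 A32' A3' $$ (i,j)"
  unfolding pc_A_def by auto

lemma diag_quad:
  fixes D :: "real mat"
  assumes D: "D \<in> carrier_mat n n" and y: "y \<in> carrier_vec n"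
    and diag: "\<And>i j. i < n \<Longrightarrow> j < n \<Longrightarrow> i \<noteq> j \<Longrightarrow> D $$ (i,j) = 0"
  shows "y \<bullet> (D *\<^sub>v y) = (\<Sum>i = 0..<n. D $$ (i,i) * (y $ i)^2)"
proof -
  have "y \<bullet> (D *\<^sub>v y) = (\<Sum>i = 0..<n. y $ i * (\<Sum>j = 0..<n. D $$ (i,j) * y $ j))"
    using D y by (simp add: scalar_prod_def)
  also have "\<dots> = (\<Sum>i = 0..<n. y $ i * (D $$ (i,i) * y $ i))"
  proof (intro sum.cong refl)
    fix i assume i: "i \<in> {0..<n}"
    have "(\<Sum>j = 0..<n. D $$ (i,j) * y $ j) = (\<Sum>j = 0..<n. if j = i then D $$ (i,i) * y $ i else 0)"
      by (intro sum.cong refl, insert i diag, auto)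
    also have "\<dots> = D $$ (i,i) * y $ i" using i by simp
    finally show "y $ i * (\<Sum>j = 0..<n. D $$ (i,j) * y $ j) = y $ i * (D $$ (i,i) * y $ i)" by simp
  qed
  also have "\<dots> = (\<Sum>i = 0..<n. D $$ (i,i) * (y $ i)^2)" by (simp add: power2_eq_square ac_simps)
  finally show ?thesis .
qed

lemma part1_cost:
  fixes A B K I1p :: "real mat" and sc se s3 du :: nat
  defines "d \<equiv> sc + se + s3"
  assumes A: "A = pc_A sc se s3 A1 A12 A2 A32 A3" and B: "B = pc_B sc se s3 du B1"
    and I: "I1p \<in> carrier_mat d d"
    and Id: "\<forall>i < d. \<forall>j < d. i \<noteq> j \<longrightarrow> I1p $$ (i, j) = 0"
    and I1: "\<forall>i < sc. I1p $$ (i, i) = 1"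
    and st: "stabilizing A B K" and x: "x \<in> carrier_vec d"
  shows "lq_cost A B (1\<^sub>m d) K x = lq_cost A B I1p K x
     + (\<Sum>t. \<Sum>i \<in> {sc..<d}. (1 - I1p $$ (i,i)) * ((A ^\<^sub>m t *\<^sub>v x) $ i)^2)"
proof -
  have Ac: "A \<in> carrier_mat d d" unfolding A d_def by (rule pcA_carrier)
  have Bc: "B \<in> carrier_mat d du" unfolding B d_def by (rule pcB_carrier)
  have K: "K \<in> carrier_mat du d" using st Ac Bc unfolding stabilizing_def by auto
  define y where "y t = closed_loop A B K ^\<^sub>m t *\<^sub>v x" for t
  have vy: "vdec d y" unfolding y_def by (rule stabilizing_vdec[OF Ac Bc st x])
  have yc: "y t \<in> carrier_vec d" for t using vdec_carrier[OF vy] .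
  have low: "y t $ i = (A ^\<^sub>m t *\<^sub>v x) $ i" if "sc \<le> i" "i < d" for t i
  proof (rule traj_low[OF Ac Bc _ _ yc _ _ x _ that])
    show "\<And>i j. sc \<le> i \<Longrightarrow> i < d \<Longrightarrow> j < sc \<Longrightarrow> A $$ (i, j) = 0" unfolding A d_def by (rule pcA_low)
    show "\<And>i j. sc \<le> i \<Longrightarrow> i < d \<Longrightarrow> j < du \<Longrightarrow> B $$ (i, j) = 0" unfolding B d_def by (rule pcB_low)
    show "\<And>t. K *\<^sub>v y t \<in> carrier_vec du" using K yc by auto
    show "\<And>t. y (Suc t) = A *\<^sub>v y t + B *\<^sub>v (K *\<^sub>v y t)" unfolding y_def
      by (rule closed_loop_step[OF Ac Bc K x])
    show "\<And>j. sc \<le> j \<Longrightarrow> j < d \<Longrightarrow> y 0 $ j = x $ j" unfolding y_def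
      using x closed_loop_carrier[OF Ac Bc K] by simp
  qed
  define g where "g t = (\<Sum>i \<in> {sc..<d}. (1 - I1p $$ (i,i)) * ((A ^\<^sub>m t *\<^sub>v x) $ i)^2)" for t
  have tm: "cterm (1\<^sub>m d) K (y t) = cterm I1p K (y t) + g t" for t
  proof -
    have "y t \<bullet> (1\<^sub>m d *\<^sub>v y t) = (\<Sum>i = 0..<d. 1\<^sub>m d $$ (i,i) * (y t $ i)^2)"
      by (rule diag_quad[OF _ yc], auto)
    also have "\<dots> = (\<Sum>i = 0..<d. I1p $$ (i,i) * (y t $ i)^2) + (\<Sum>i = 0..<d. (1 - I1p $$ (i,i)) * (y t $ i)^2)"
      by (simp add: sum.distrib[symmetric] algebra_simps)
    also have "(\<Sum>i = 0..<d. I1p $$ (i,i) * (y t $ i)^2) = y t \<bullet> (I1p *\<^sub>v y t)"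
      by (rule diag_quad[OF I yc, symmetric], insert Id, auto)
    also have "(\<Sum>i = 0..<d. (1 - I1p $$ (i,i)) * (y t $ i)^2) = 
       (\<Sum>i = 0..<sc. (1 - I1p $$ (i,i)) * (y t $ i)^2) + (\<Sum>i = sc..<d. (1 - I1p $$ (i,i)) * (y t $ i)^2)"
      by (rule sum.atLeastLessThan_concat[symmetric], auto simp: d_def)
    also have "(\<Sum>i = 0..<sc. (1 - I1p $$ (i,i)) * (y t $ i)^2) = 0" using I1 by simp
    also have "(\<Sum>i = sc..<d. (1 - I1p $$ (i,i)) * (y t $ i)^2) = g t"
      unfolding g_def by (intro sum.cong refl, insert low, auto)
    finally show ?thesis unfolding cterm_def by simp
  qed
  have s1: "summable (\<lambda>t. cterm I1p K (y t))"
    by (rule gdec_summable[OF cterm_gdec[OF vy I K]])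
  have s2: "summable g"
  proof -
    have "gdec (\<lambda>t. \<Sum>i \<in> {sc..<d}. (1 - I1p $$ (i,i)) * (y t $ i * y t $ i))"
      using vy unfolding vdec_def by (intro gdec_sum gdec_cmult gdec_mult, auto)
    moreover have "(\<Sum>i \<in> {sc..<d}. (1 - I1p $$ (i,i)) * (y t $ i * y t $ i)) = g t" for t
      unfolding g_def by (intro sum.cong refl, insert low, auto simp: power2_eq_square)
    ultimately show ?thesis using gdec_summable by simp
  qed
  show ?thesis unfolding lq_cost_alt y_def[symmetric] tm g_def[symmetric]
    by (rule suminf_add[OF s1 s2, symmetric])
qed

lemma part1_opt:
  fixes I1p :: "real mat" and sc se s3 du :: nat
  defines "d \<equiv> sc + se + s3"
  assumes A: "A = pc_A sc se s3 A1 A12 A2 A32 A3" and B: "B = pc_B sc se s3 du B1"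
    and I: "I1p \<in> carrier_mat d d"
    and Id: "\<forall>i < d. \<forall>j < d. i \<noteq> j \<longrightarrow> I1p $$ (i, j) = 0"
    and I1: "\<forall>i < sc. I1p $$ (i, i) = 1"
  shows "optimal_gain A B (1\<^sub>m d) K = optimal_gain A B I1p K"
proof -
  have Ac: "dim_row A = d" unfolding A d_def pc_A_def by simp
  note pc = part1_cost[OF A B I[unfolded d_def] Id[unfolded d_def] I1, folded d_def]
  show ?thesis unfolding optimal_gain_def Ac
    by (auto simp: pc)
qed




lemma sq_nonneg_vec: "(v :: real vec) \<bullet> v \<ge> 0"
  unfolding scalar_prod_def by (intro sum_nonneg, auto)

lemma sq_zero_vec:
  assumes v: "(v :: real vec) \<in> carrier_vec n" and z: "v \<bullet> v = 0"
  shows "v = 0\<^sub>v n"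
proof (rule eq_vecI)
  fix i assume i: "i < dim_vec (0\<^sub>v n)"
  have "\<forall>j\<in>{0..<dim_vec v}. v $ j * v $ j = 0"
    using z unfolding scalar_prod_def by (subst sum_nonneg_eq_0_iff[symmetric], auto)
  hence "v $ i * v $ i = 0" using i v by auto
  thus "v $ i = 0\<^sub>v n $ i" using i by simp
qed (insert v, auto)

lemma sq_component_le:
  assumes v: "(v :: real vec) \<in> carrier_vec n" and i: "i < n"
  shows "(v $ i)^2 \<le> v \<bullet> v"
proof -
  have "(v $ i)^2 = (\<Sum>j\<in>{i}. v $ j * v $ j)" by (simp add: power2_eq_square)
  also have "\<dots> \<le> (\<Sum>j\<in>{0..<n}. v $ j * v $ j)" using i by (intro sum_mono2, auto)
  also have "\<dots> = v \<bullet> v" using v by (simp add: scalar_prod_def)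
  finally show ?thesis .
qed

lemma unit_entry:
  assumes W: "(W :: real mat) \<in> carrier_mat n n" and i: "i < n" and j: "j < n"
  shows "unit_vec n i \<bullet> (W *\<^sub>v unit_vec n j) = W $$ (i,j)"
  using W i j by (simp add: scalar_prod_left_unit scalar_prod_right_unit)

lemma mat_series:
  fixes W :: "nat \<Rightarrow> real mat"
  assumes W: "\<And>t. W t \<in> carrier_mat n n" and sm: "\<And>i j. i < n \<Longrightarrow> j < n \<Longrightarrow> summable (\<lambda>t. W t $$ (i,j))"
    and x: "x \<in> carrier_vec n" and z: "z \<in> carrier_vec n"
  shows "summable (\<lambda>t. x \<bullet> (W t *\<^sub>v z))"
    "x \<bullet> (mat n n (\<lambda>(i,j). \<Sum>t. W t $$ (i,j)) *\<^sub>v z) = (\<Sum>t. x \<bullet> (W t *\<^sub>v z))"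
proof -
  have e: "x \<bullet> (W t *\<^sub>v z) = (\<Sum>i = 0..<n. \<Sum>j = 0..<n. x $ i * (z $ j * W t $$ (i,j)))" for t
    using W[of t] x z by (simp add: scalar_prod_def sum_distrib_left ac_simps)
  have s: "summable (\<lambda>t. x $ i * (z $ j * W t $$ (i,j)))" if "i < n" "j < n" for i j
    by (intro summable_mult sm that)
  show "summable (\<lambda>t. x \<bullet> (W t *\<^sub>v z))" unfolding e
    by (intro summable_sum, insert s, auto)
  have "x \<bullet> (mat n n (\<lambda>(i,j). \<Sum>t. W t $$ (i,j)) *\<^sub>v z) = (\<Sum>i = 0..<n. \<Sum>j = 0..<n. x $ i * (z $ j * (\<Sum>t. W t $$ (i,j))))"
    using x z by (simp add: scalar_prod_def sum_distrib_left ac_simps)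
  also have "\<dots> = (\<Sum>i = 0..<n. \<Sum>j = 0..<n. \<Sum>t. x $ i * (z $ j * W t $$ (i,j)))"
    by (intro sum.cong refl, simp add: suminf_mult sm)
  also have "\<dots> = (\<Sum>i = 0..<n. \<Sum>t. \<Sum>j = 0..<n. x $ i * (z $ j * W t $$ (i,j)))"
    by (intro sum.cong refl suminf_sum[symmetric] s, auto)
  also have "\<dots> = (\<Sum>t. \<Sum>i = 0..<n. \<Sum>j = 0..<n. x $ i * (z $ j * W t $$ (i,j)))"
    by (intro suminf_sum[symmetric] summable_sum s, auto)
  also have "\<dots> = (\<Sum>t. x \<bullet> (W t *\<^sub>v z))" unfolding e ..
  finally show "x \<bullet> (mat n n (\<lambda>(i,j). \<Sum>t. W t $$ (i,j)) *\<^sub>v z) = (\<Sum>t. x \<bullet> (W t *\<^sub>v z))" .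
qed

definition cform :: "real mat \<Rightarrow> real vec \<Rightarrow> real vec \<Rightarrow> real" where
  "cform K a b = a \<bullet> b + (K *\<^sub>v a) \<bullet> (K *\<^sub>v b)"

lemma cform_sym: "a \<in> carrier_vec n \<Longrightarrow> b \<in> carrier_vec n \<Longrightarrow> K \<in> carrier_mat k n \<Longrightarrow> cform K a b = cform K b a"
  unfolding cform_def by (simp add: comm_scalar_prod[of a n b] comm_scalar_prod[of "K *\<^sub>v a" k "K *\<^sub>v b"])

lemma cterm_cform: "y \<in> carrier_vec n \<Longrightarrow> cterm (1\<^sub>m n) K y = cform K y y"
  unfolding cterm_def cform_def by simp

lemma quad_P:
  fixes A B K :: "real mat"
  assumes A: "A \<in> carrier_mat n n" and B: "B \<in> carrier_mat n k" and st: "stabilizing A B K"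
  obtains P :: "real mat" where "P \<in> carrier_mat n n"
    "\<And>x z. x \<in> carrier_vec n \<Longrightarrow> z \<in> carrier_vec n \<Longrightarrow> x \<bullet> (P *\<^sub>v z) = z \<bullet> (P *\<^sub>v x)"
    "\<And>x. x \<in> carrier_vec n \<Longrightarrow> lq_cost A B (1\<^sub>m n) K x = x \<bullet> (P *\<^sub>v x)"
proof -
  have K: "K \<in> carrier_mat k n" using st A B unfolding stabilizing_def by auto
  define M where "M = closed_loop A B K"
  have M: "M \<in> carrier_mat n n" unfolding M_def by (rule closed_loop_carrier[OF A B K])
  define N where "N t = M ^\<^sub>m t" for t
  have N: "N t \<in> carrier_mat n n" for t unfolding N_def using M by simp
  define W where "W t = transpose_mat (N t) * N t + transpose_mat (K * N t) * (K * N t)" for t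
  have W: "W t \<in> carrier_mat n n" for t unfolding W_def using N[of t] K by auto
  have Wf: "x \<bullet> (W t *\<^sub>v z) = cform K (N t *\<^sub>v x) (N t *\<^sub>v z)" if x: "x \<in> carrier_vec n" and z: "z \<in> carrier_vec n" for x z t
  proof -
    have KN: "K * N t \<in> carrier_mat k n" using K N[of t] by auto
    have "W t *\<^sub>v z = transpose_mat (N t) *\<^sub>v (N t *\<^sub>v z) + transpose_mat (K * N t) *\<^sub>v ((K * N t) *\<^sub>v z)"
      unfolding W_def using N[of t] KN z
      by (simp add: add_mult_distrib_mat_vec[of _ n n] assoc_mult_mat_vec[of _ n n _ n])
    hence "x \<bullet> (W t *\<^sub>v z) = x \<bullet> (transpose_mat (N t) *\<^sub>v (N t *\<^sub>v z)) + x \<bullet> (transpose_mat (K * N t) *\<^sub>v ((K * N t) *\<^sub>v z))"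
      using x z N[of t] KN by (simp add: scalar_prod_add_distrib[of x n])
    also have "x \<bullet> (transpose_mat (N t) *\<^sub>v (N t *\<^sub>v z)) = (N t *\<^sub>v z) \<bullet> (N t *\<^sub>v x)"
      using x z N[of t] by (simp add: comm_scalar_prod[of x n] transpose_vec_mult_scalar[of _ n n])
    also have "\<dots> = (N t *\<^sub>v x) \<bullet> (N t *\<^sub>v z)" using x z N[of t] by (simp add: comm_scalar_prod[of _ n])
    also have "x \<bullet> (transpose_mat (K * N t) *\<^sub>v ((K * N t) *\<^sub>v z)) = ((K * N t) *\<^sub>v z) \<bullet> ((K * N t) *\<^sub>v x)"
      using x z KN by (simp add: comm_scalar_prod[of x n] transpose_vec_mult_scalar[of _ k n])
    also have "\<dots> = (K *\<^sub>v (N t *\<^sub>v x)) \<bullet> (K *\<^sub>v (N t *\<^sub>v z))" using x z N[of t] K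
      by (simp add: comm_scalar_prod[of _ k] assoc_mult_mat_vec[of _ k n _ n])
    finally show ?thesis unfolding cform_def .
  qed
  have vd: "vdec n (\<lambda>t. N t *\<^sub>v x)" if "x \<in> carrier_vec n" for x
    unfolding N_def M_def by (rule stabilizing_vdec[OF A B st that])
  have cg: "gdec (\<lambda>t. cform K (N t *\<^sub>v x) (N t *\<^sub>v z))" if "x \<in> carrier_vec n" "z \<in> carrier_vec n" for x z
    unfolding cform_def
    by (intro gdec_add vdec_scalar[of n] vdec_scalar[of k] vdec_mult[OF K] vd that)
  have sm: "summable (\<lambda>t. W t $$ (i,j))" if "i < n" "j < n" for i j
  proof -
    have "W t $$ (i,j) = cform K (N t *\<^sub>v unit_vec n i) (N t *\<^sub>v unit_vec n j)" for t
      using Wf[of "unit_vec n i" "unit_vec n j" t] unit_entry[OF W that] by simp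
    thus ?thesis using gdec_summable[OF cg[of "unit_vec n i" "unit_vec n j"]] that by simp
  qed
  define P where "P = mat n n (\<lambda>(i,j). \<Sum>t. W t $$ (i,j))"
  have Pf: "x \<bullet> (P *\<^sub>v z) = (\<Sum>t. cform K (N t *\<^sub>v x) (N t *\<^sub>v z))" if "x \<in> carrier_vec n" "z \<in> carrier_vec n" for x z
    unfolding P_def using mat_series(2)[OF W sm that] Wf[OF that] by simp
  show ?thesis
  proof (rule that)
    show "P \<in> carrier_mat n n" unfolding P_def by simp
    fix x z :: "real vec" assume x: "x \<in> carrier_vec n" and z: "z \<in> carrier_vec n"
    show "x \<bullet> (P *\<^sub>v z) = z \<bullet> (P *\<^sub>v x)" unfolding Pf[OF x z] Pf[OF z x]
      using cform_sym[OF _ _ K] N x z by (metis mult_mat_vec_carrier)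
  next
    fix x :: "real vec" assume x: "x \<in> carrier_vec n"
    show "lq_cost A B (1\<^sub>m n) K x = x \<bullet> (P *\<^sub>v x)"
      unfolding Pf[OF x x] lq_cost_alt M_def[symmetric] N_def
      using cterm_cform[of _ n] M x by simp
  qed
qed




definition symP :: "nat \<Rightarrow> real mat \<Rightarrow> bool" where
  "symP n P \<longleftrightarrow> P \<in> carrier_mat n n \<and> (\<forall>x \<in> carrier_vec n. \<forall>z \<in> carrier_vec n. x \<bullet> (P *\<^sub>v z) = z \<bullet> (P *\<^sub>v x))"

lemma qexp:
  assumes P: "symP n P" and a: "a \<in> carrier_vec n" and b: "b \<in> carrier_vec n"
  shows "(a + b) \<bullet> (P *\<^sub>v (a + b)) = a \<bullet> (P *\<^sub>v a) + 2 * (b \<bullet> (P *\<^sub>v a)) + b \<bullet> (P *\<^sub>v b)"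
proof -
  have Pc: "P \<in> carrier_mat n n" using P unfolding symP_def by auto
  have "(a + b) \<bullet> (P *\<^sub>v (a + b)) = (a + b) \<bullet> (P *\<^sub>v a + P *\<^sub>v b)"
    using Pc a b by (simp add: mult_add_distrib_mat_vec[of P n n])
  also have "\<dots> = a \<bullet> (P *\<^sub>v a) + a \<bullet> (P *\<^sub>v b) + (b \<bullet> (P *\<^sub>v a) + b \<bullet> (P *\<^sub>v b))"
    using Pc a b by (simp add: add_scalar_prod_distrib[of a n] scalar_prod_add_distrib[of _ n])
  also have "a \<bullet> (P *\<^sub>v b) = b \<bullet> (P *\<^sub>v a)" using P a b unfolding symP_def by auto
  finally show ?thesis by simp
qed

lemma sqexp:
  assumes a: "(a :: real vec) \<in> carrier_vec n" and b: "b \<in> carrier_vec n"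
  shows "(a + b) \<bullet> (a + b) = a \<bullet> a + 2 * (b \<bullet> a) + b \<bullet> b"
proof -
  have "(a + b) \<bullet> (a + b) = a \<bullet> a + a \<bullet> b + (b \<bullet> a + b \<bullet> b)"
    using a b by (simp add: add_scalar_prod_distrib[of a n] scalar_prod_add_distrib[of _ n])
  also have "a \<bullet> b = b \<bullet> a" using a b by (rule comm_scalar_prod)
  finally show ?thesis by simp
qed

definition fixcond :: "real mat \<Rightarrow> real mat \<Rightarrow> real mat \<Rightarrow> real mat \<Rightarrow> nat \<Rightarrow> nat \<Rightarrow> bool" where
  "fixcond A B P Kp n k \<longleftrightarrow> (\<forall>x \<in> carrier_vec n. \<forall>v \<in> carrier_vec k.
      v \<bullet> (Kp *\<^sub>v x) + (B *\<^sub>v v) \<bullet> (P *\<^sub>v (A *\<^sub>v x + B *\<^sub>v (Kp *\<^sub>v x))) = 0)"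

lemma ID:
  fixes A B P Kp :: "real mat"
  assumes A: "A \<in> carrier_mat n n" and B: "B \<in> carrier_mat n k" and P: "symP n P"
    and Kp: "Kp \<in> carrier_mat k n" and fc: "fixcond A B P Kp n k"
    and x: "x \<in> carrier_vec n" and z: "z \<in> carrier_vec k"
  shows "z \<bullet> z + (A *\<^sub>v x + B *\<^sub>v z) \<bullet> (P *\<^sub>v (A *\<^sub>v x + B *\<^sub>v z)) =
    (Kp *\<^sub>v x) \<bullet> (Kp *\<^sub>v x) + (A *\<^sub>v x + B *\<^sub>v (Kp *\<^sub>v x)) \<bullet> (P *\<^sub>v (A *\<^sub>v x + B *\<^sub>v (Kp *\<^sub>v x)))
    + (z - Kp *\<^sub>v x) \<bullet> (z - Kp *\<^sub>v x) + (B *\<^sub>v (z - Kp *\<^sub>v x)) \<bullet> (P *\<^sub>v (B *\<^sub>v (z - Kp *\<^sub>v x)))"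
proof -
  define w where "w = Kp *\<^sub>v x"
  define v where "v = z - w"
  have w: "w \<in> carrier_vec k" unfolding w_def using Kp x by auto
  have v: "v \<in> carrier_vec k" unfolding v_def using w z by auto
  have zwv: "z = w + v" unfolding v_def using w z by (intro eq_vecI, auto)
  define a where "a = A *\<^sub>v x + B *\<^sub>v w"
  have a: "a \<in> carrier_vec n" unfolding a_def using A B x w by auto
  have Bv: "B *\<^sub>v v \<in> carrier_vec n" using B v by auto
  have e1: "A *\<^sub>v x + B *\<^sub>v z = a + B *\<^sub>v v"
    unfolding a_def zwv using A B x w v by (simp add: mult_add_distrib_mat_vec[of B n k] assoc_add_vec[of _ n])
  have c: "v \<bullet> w + (B *\<^sub>v v) \<bullet> (P *\<^sub>v a) = 0" using fc x v unfolding fixcond_def a_def w_def by auto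
  have s1: "z \<bullet> z = w \<bullet> w + 2 * (v \<bullet> w) + v \<bullet> v" using sqexp[OF w v] zwv by simp
  have s2: "(A *\<^sub>v x + B *\<^sub>v z) \<bullet> (P *\<^sub>v (A *\<^sub>v x + B *\<^sub>v z)) = 
     a \<bullet> (P *\<^sub>v a) + 2 * ((B *\<^sub>v v) \<bullet> (P *\<^sub>v a)) + (B *\<^sub>v v) \<bullet> (P *\<^sub>v (B *\<^sub>v v))"
    using qexp[OF P a Bv] e1 by simp
  show ?thesis unfolding s1 s2 w_def[symmetric] v_def[symmetric] a_def[symmetric]
    using c by linarith
qed

lemma mat_vec_uminus:
  assumes "(G :: real mat) \<in> carrier_mat m n" "u \<in> carrier_vec n"
  shows "G *\<^sub>v (- u) = - (G *\<^sub>v u)"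
  using assms by (intro eq_vecI, auto simp: scalar_prod_def sum_negf)

lemma fixcond_construct:
  fixes A B P :: "real mat"
  assumes A: "A \<in> carrier_mat n n" and B: "B \<in> carrier_mat n k" and P: "symP n P"
    and Ppsd: "\<And>y. y \<in> carrier_vec n \<Longrightarrow> y \<bullet> (P *\<^sub>v y) \<ge> 0"
  shows "\<exists>Kp. Kp \<in> carrier_mat k n \<and> fixcond A B P Kp n k"
proof -
  have Pc: "P \<in> carrier_mat n n" using P unfolding symP_def by auto
  define G where "G = 1\<^sub>m k + transpose_mat B * (P * B)"
  have G: "G \<in> carrier_mat k k" unfolding G_def using B Pc by auto
  have Gf: "v \<bullet> (G *\<^sub>v w) = v \<bullet> w + (B *\<^sub>v v) \<bullet> (P *\<^sub>v (B *\<^sub>v w))" if v: "v \<in> carrier_vec k" and w: "w \<in> carrier_vec k" for v w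
  proof -
    have "G *\<^sub>v w = w + transpose_mat B *\<^sub>v (P *\<^sub>v (B *\<^sub>v w))" unfolding G_def using B Pc w
      by (simp add: add_mult_distrib_mat_vec[of _ k k] assoc_mult_mat_vec[of _ k n _ k] assoc_mult_mat_vec[of _ n n _ k])
    hence "v \<bullet> (G *\<^sub>v w) = v \<bullet> w + v \<bullet> (transpose_mat B *\<^sub>v (P *\<^sub>v (B *\<^sub>v w)))"
      using v w B Pc by (simp add: scalar_prod_add_distrib[of v k])
    also have "v \<bullet> (transpose_mat B *\<^sub>v (P *\<^sub>v (B *\<^sub>v w))) = (B *\<^sub>v v) \<bullet> (P *\<^sub>v (B *\<^sub>v w))"
      using v w B Pc by (simp add: comm_scalar_prod[of v k] transpose_vec_mult_scalar[of B n k] comm_scalar_prod[of _ n])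
    finally show ?thesis .
  qed
  have "det G \<noteq> 0"
  proof
    assume "det G = 0"
    then obtain v where v: "v \<in> carrier_vec k" "v \<noteq> 0\<^sub>v k" "G *\<^sub>v v = 0\<^sub>v k"
      using det_0_iff_vec_prod_zero[OF G] by auto
    have "v \<bullet> (G *\<^sub>v v) = 0" using v by simp
    hence "v \<bullet> v + (B *\<^sub>v v) \<bullet> (P *\<^sub>v (B *\<^sub>v v)) = 0" using Gf[OF v(1) v(1)] by simp
    moreover have "(B *\<^sub>v v) \<bullet> (P *\<^sub>v (B *\<^sub>v v)) \<ge> 0" using Ppsd B v by auto
    ultimately have "v \<bullet> v = 0" using sq_nonneg_vec[of v] by linarith
    with sq_zero_vec[OF v(1)] v(2) show False by simp
  qed
  from det_non_zero_imp_unit[OF G this, of undefined]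
  obtain Gi where Gi: "Gi \<in> carrier_mat k k" "G * Gi = 1\<^sub>m k"
    unfolding Units_def ring_mat_def by auto
  define L where "L = transpose_mat B * (P * A)"
  have L: "L \<in> carrier_mat k n" unfolding L_def using A B Pc by auto
  define Kp where "Kp = - (Gi * L)"
  have Kp: "Kp \<in> carrier_mat k n" unfolding Kp_def using Gi L by auto
  have "fixcond A B P Kp n k" unfolding fixcond_def
  proof (intro ballI)
    fix x v :: "real vec" assume x: "x \<in> carrier_vec n" and v: "v \<in> carrier_vec k"
    define w where "w = Kp *\<^sub>v x"
    have w: "w \<in> carrier_vec k" unfolding w_def using Kp x by auto
    have Lx: "L *\<^sub>v x \<in> carrier_vec k" using L x by auto
    have Gw: "G *\<^sub>v w = - (L *\<^sub>v x)"
    proof -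
      have "G *\<^sub>v w = G *\<^sub>v (- (Gi *\<^sub>v (L *\<^sub>v x)))" unfolding w_def Kp_def using Gi L x
        by (simp add: uminus_mult_mat_vec assoc_mult_mat_vec[of _ k k _ n])
      also have "\<dots> = - (G *\<^sub>v (Gi *\<^sub>v (L *\<^sub>v x)))" 
        by (rule mat_vec_uminus[OF G], insert Gi Lx, auto)
      also have "G *\<^sub>v (Gi *\<^sub>v (L *\<^sub>v x)) = (G * Gi) *\<^sub>v (L *\<^sub>v x)" 
        by (rule assoc_mult_mat_vec[symmetric], insert G Gi Lx, auto)
      also have "\<dots> = L *\<^sub>v x" using Gi Lx by simp
      finally show ?thesis .
    qed
    have "(B *\<^sub>v v) \<bullet> (P *\<^sub>v (A *\<^sub>v x + B *\<^sub>v w)) = (B *\<^sub>v v) \<bullet> (P *\<^sub>v (A *\<^sub>v x)) + (B *\<^sub>v v) \<bullet> (P *\<^sub>v (B *\<^sub>v w))"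
      using A B Pc x v w by (simp add: mult_add_distrib_mat_vec[of P n n] scalar_prod_add_distrib[of _ n])
    also have "(B *\<^sub>v v) \<bullet> (P *\<^sub>v (A *\<^sub>v x)) = v \<bullet> (L *\<^sub>v x)"
      unfolding L_def using A B Pc x v
      by (simp add: comm_scalar_prod[of v k] transpose_vec_mult_scalar[of B n k] comm_scalar_prod[of _ n]
          assoc_mult_mat_vec[of _ k n _ n] assoc_mult_mat_vec[of _ n n _ n])
    finally have "v \<bullet> w + (B *\<^sub>v v) \<bullet> (P *\<^sub>v (A *\<^sub>v x + B *\<^sub>v w)) = v \<bullet> (G *\<^sub>v w) + v \<bullet> (L *\<^sub>v x)"
      using Gf[OF v w] by simp
    also have "\<dots> = 0" unfolding Gw using v Lx by (auto simp: scalar_prod_def sum_negf)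
    finally show "v \<bullet> (Kp *\<^sub>v x) + (B *\<^sub>v v) \<bullet> (P *\<^sub>v (A *\<^sub>v x + B *\<^sub>v (Kp *\<^sub>v x))) = 0"
      unfolding w_def .
  qed
  thus ?thesis using Kp by blast
qed




lemma lq_cost_bellman:
  fixes A B K :: "real mat"
  assumes A: "A \<in> carrier_mat n n" and B: "B \<in> carrier_mat n k" and st: "stabilizing A B K"
    and x: "x \<in> carrier_vec n"
  shows "lq_cost A B (1\<^sub>m n) K x = cform K x x + lq_cost A B (1\<^sub>m n) K (A *\<^sub>v x + B *\<^sub>v (K *\<^sub>v x))"
proof -
  have K: "K \<in> carrier_mat k n" using st A B unfolding stabilizing_def by auto
  define M where "M = closed_loop A B K"
  have M: "M \<in> carrier_mat n n" unfolding M_def by (rule closed_loop_carrier[OF A B K])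
  define f where "f t = cterm (1\<^sub>m n) K (M ^\<^sub>m t *\<^sub>v x)" for t
  have sf: "summable f" unfolding f_def M_def
    by (rule gdec_summable[OF cterm_gdec[OF stabilizing_vdec[OF A B st x] _ K]], auto)
  have Mx: "M *\<^sub>v x = A *\<^sub>v x + B *\<^sub>v (K *\<^sub>v x)"
    using closed_loop_step[OF A B K x, of 0] M x unfolding M_def by simp
  have fs: "f (Suc t) = cterm (1\<^sub>m n) K (M ^\<^sub>m t *\<^sub>v (M *\<^sub>v x))" for t
    unfolding f_def using M x by (simp add: assoc_mult_mat_vec[of _ n n _ n])
  have "lq_cost A B (1\<^sub>m n) K x = suminf f" unfolding lq_cost_alt f_def M_def ..
  also have "\<dots> = f 0 + (\<Sum>t. f (Suc t))" using suminf_split_head[OF sf] by simp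
  also have "f 0 = cform K x x" unfolding f_def using M x cterm_cform[OF x] by simp
  also have "(\<Sum>t. f (Suc t)) = lq_cost A B (1\<^sub>m n) K (A *\<^sub>v x + B *\<^sub>v (K *\<^sub>v x))"
    unfolding fs lq_cost_alt M_def[symmetric] Mx ..
  finally show ?thesis .
qed

lemma cform_nonneg: "cform K y y \<ge> 0"
  unfolding cform_def using sq_nonneg_vec[of y] sq_nonneg_vec[of "K *\<^sub>v y"] by linarith

lemma lq_cost_nonneg:
  fixes A B K :: "real mat"
  assumes A: "A \<in> carrier_mat n n" and B: "B \<in> carrier_mat n k" and st: "stabilizing A B K"
    and x: "x \<in> carrier_vec n"
  shows "lq_cost A B (1\<^sub>m n) K x \<ge> 0"
proof -
  have K: "K \<in> carrier_mat k n" using st A B unfolding stabilizing_def by auto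
  have M: "closed_loop A B K \<in> carrier_mat n n" by (rule closed_loop_carrier[OF A B K])
  show ?thesis unfolding lq_cost_alt
    by (rule suminf_nonneg[OF gdec_summable[OF cterm_gdec[OF stabilizing_vdec[OF A B st x] _ K]]],
        insert M x, auto simp: cterm_cform cform_nonneg)
qed

lemma q_tendsto:
  fixes P :: "real mat"
  assumes P: "P \<in> carrier_mat n n" and y: "\<And>t. y t \<in> carrier_vec n"
    and lim: "\<And>i. i < n \<Longrightarrow> (\<lambda>t. y t $ i) \<longlonglongrightarrow> 0"
  shows "(\<lambda>t. y t \<bullet> (P *\<^sub>v y t)) \<longlonglongrightarrow> 0"
proof -
  have eq: "y t \<bullet> (P *\<^sub>v y t) = (\<Sum>i\<in>{0..<n}. \<Sum>j\<in>{0..<n}. y t $ i * (P $$ (i,j) * y t $ j))" for t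
    using P y[of t] by (simp add: scalar_prod_def sum_distrib_left)
  have "(\<lambda>t. \<Sum>i\<in>{0..<n}. \<Sum>j\<in>{0..<n}. y t $ i * (P $$ (i,j) * y t $ j)) \<longlonglongrightarrow> 
      (\<Sum>i\<in>{0..<n}. \<Sum>j\<in>{0..<n}. 0 * (P $$ (i,j) * 0))"
    by (intro tendsto_sum tendsto_mult tendsto_const lim, auto)
  thus ?thesis unfolding eq by simp
qed

lemma sq_to_comp:
  assumes y: "\<And>t. (y t :: real vec) \<in> carrier_vec n" and lim: "(\<lambda>t. y t \<bullet> y t) \<longlonglongrightarrow> 0" and i: "i < n"
  shows "(\<lambda>t. y t $ i) \<longlonglongrightarrow> 0"
proof -
  have b: "\<bar>y t $ i\<bar> \<le> sqrt (y t \<bullet> y t)" for t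
    using real_sqrt_le_mono[OF sq_component_le[OF y i, of t]] by simp
  have l: "(\<lambda>t. sqrt (y t \<bullet> y t)) \<longlonglongrightarrow> 0" using tendsto_real_sqrt[OF lim] by simp
  have l2: "(\<lambda>t. - sqrt (y t \<bullet> y t)) \<longlonglongrightarrow> 0" using tendsto_minus[OF l] by simp
  show ?thesis
  proof (rule tendsto_sandwich[OF _ _ l2 l])
    show "\<forall>\<^sub>F t in sequentially. - sqrt (y t \<bullet> y t) \<le> y t $ i"
    proof (intro always_eventually allI)
      fix t show "- sqrt (y t \<bullet> y t) \<le> y t $ i" using b[of t] by linarith
    qed
    show "\<forall>\<^sub>F t in sequentially. y t $ i \<le> sqrt (y t \<bullet> y t)"
    proof (intro always_eventually allI)
      fix t show "y t $ i \<le> sqrt (y t \<bullet> y t)" using b[of t] by linarith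
    qed
  qed
qed

lemma mat_eq_by_vec:
  fixes K K' :: "real mat"
  assumes K: "K \<in> carrier_mat k n" and K': "K' \<in> carrier_mat k n"
    and eq: "\<And>x. x \<in> carrier_vec n \<Longrightarrow> K *\<^sub>v x = K' *\<^sub>v x"
  shows "K = K'"
proof (rule eq_matI)
  fix i j assume i: "i < dim_row K'" and j: "j < dim_col K'"
  have "K $$ (i,j) = (K *\<^sub>v unit_vec n j) $ i" using K K' i j by (simp add: scalar_prod_right_unit)
  also have "\<dots> = (K' *\<^sub>v unit_vec n j) $ i" using eq[of "unit_vec n j"] j K' by simp
  also have "\<dots> = K' $$ (i,j)" using K' i j by (simp add: scalar_prod_right_unit)
  finally show "K $$ (i,j) = K' $$ (i,j)" .
qed (insert K K', auto)

lemma telescope: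
  fixes f g :: "nat \<Rightarrow> real"
  assumes "\<And>t. f t = g t + f (Suc t)"
  shows "f 0 = (\<Sum>t<N. g t) + f N"
proof (induction N)
  case 0 show ?case by simp
next
  case (Suc N)
  have "(\<Sum>t<Suc N. g t) = (\<Sum>t<N. g t) + g N" by simp
  thus ?case using Suc.IH assms[of N] by linarith
qed

lemma vec_diff_zero:
  assumes "(a :: real vec) - b = 0\<^sub>v k" "a \<in> carrier_vec k" "b \<in> carrier_vec k"
  shows "a = b"
proof (rule eq_vecI)
  fix i assume i: "i < dim_vec b"
  have "(a - b) $ i = 0" using assms(1) i assms(3) by simp
  thus "a $ i = b $ i" using i assms(2,3) by simp
qed (insert assms, auto)

lemma opt_fixcond:
  fixes A B K :: "real mat"
  assumes A: "A \<in> carrier_mat n n" and B: "B \<in> carrier_mat n k" and n: "n > 0"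
    and opt: "optimal_gain A B (1\<^sub>m n) K"
  obtains P where "symP n P" "\<And>x. x \<in> carrier_vec n \<Longrightarrow> lq_cost A B (1\<^sub>m n) K x = x \<bullet> (P *\<^sub>v x)"
    "fixcond A B P K n k"
proof -
  have st: "stabilizing A B K" using opt unfolding optimal_gain_def by auto
  have K: "K \<in> carrier_mat k n" using st A B unfolding stabilizing_def by auto
  obtain P where Pc: "P \<in> carrier_mat n n"
    and Ps: "\<And>x z. x \<in> carrier_vec n \<Longrightarrow> z \<in> carrier_vec n \<Longrightarrow> x \<bullet> (P *\<^sub>v z) = z \<bullet> (P *\<^sub>v x)"
    and PV: "\<And>x. x \<in> carrier_vec n \<Longrightarrow> lq_cost A B (1\<^sub>m n) K x = x \<bullet> (P *\<^sub>v x)"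
    using quad_P[OF A B st] by blast
  have P: "symP n P" unfolding symP_def using Pc Ps by auto
  have Ppsd: "y \<bullet> (P *\<^sub>v y) \<ge> 0" if "y \<in> carrier_vec n" for y
    using lq_cost_nonneg[OF A B st that] PV[OF that] by simp
  obtain Kp where Kp: "Kp \<in> carrier_mat k n" and fc: "fixcond A B P Kp n k"
    using fixcond_construct[OF A B P Ppsd] by blast
  define q where "q y = y \<bullet> (P *\<^sub>v y)" for y
  define Dd where "Dd y = (K *\<^sub>v y - Kp *\<^sub>v y) \<bullet> (K *\<^sub>v y - Kp *\<^sub>v y) + q (B *\<^sub>v (K *\<^sub>v y - Kp *\<^sub>v y))" for y
  have step: "q y = cform Kp y y + q (A *\<^sub>v y + B *\<^sub>v (Kp *\<^sub>v y)) + Dd y" if y: "y \<in> carrier_vec n" for y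
  proof -
    have Ky: "K *\<^sub>v y \<in> carrier_vec k" using K y by auto
    have c: "A *\<^sub>v y + B *\<^sub>v (K *\<^sub>v y) \<in> carrier_vec n" using A B K y by auto
    have "q y = cform K y y + q (A *\<^sub>v y + B *\<^sub>v (K *\<^sub>v y))"
      unfolding q_def using lq_cost_bellman[OF A B st y] PV[OF y] PV[OF c] by simp
    also have "\<dots> = y \<bullet> y + ((K *\<^sub>v y) \<bullet> (K *\<^sub>v y) + q (A *\<^sub>v y + B *\<^sub>v (K *\<^sub>v y)))"
      unfolding cform_def by simp
    also have "(K *\<^sub>v y) \<bullet> (K *\<^sub>v y) + q (A *\<^sub>v y + B *\<^sub>v (K *\<^sub>v y)) =
       (Kp *\<^sub>v y) \<bullet> (Kp *\<^sub>v y) + q (A *\<^sub>v y + B *\<^sub>v (Kp *\<^sub>v y)) + Dd y"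
      using ID[OF A B P Kp fc y Ky] unfolding q_def Dd_def by linarith
    finally show ?thesis unfolding cform_def by simp
  qed
  have Dd_ge: "Dd y \<ge> (K *\<^sub>v y - Kp *\<^sub>v y) \<bullet> (K *\<^sub>v y - Kp *\<^sub>v y)" if y: "y \<in> carrier_vec n" for y
  proof -
    have c: "B *\<^sub>v (K *\<^sub>v y - Kp *\<^sub>v y) \<in> carrier_vec n" using B K Kp y by auto
    show ?thesis using Ppsd[OF c] unfolding Dd_def q_def by linarith
  qed
  have Dd_nn: "Dd y \<ge> 0" if y: "y \<in> carrier_vec n" for y
    using Dd_ge[OF y] sq_nonneg_vec[of "K *\<^sub>v y - Kp *\<^sub>v y"] by linarith
  define Mp where "Mp = closed_loop A B Kp"
  have Mp: "Mp \<in> carrier_mat n n" unfolding Mp_def by (rule closed_loop_carrier[OF A B Kp])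
  define yp where "yp x t = Mp ^\<^sub>m t *\<^sub>v x" for x t
  have ypc: "yp x t \<in> carrier_vec n" if "x \<in> carrier_vec n" for x t
    unfolding yp_def using Mp that by simp
  have yp0: "yp x 0 = x" if "x \<in> carrier_vec n" for x unfolding yp_def using Mp that by simp
  have ypS: "yp x (Suc t) = A *\<^sub>v yp x t + B *\<^sub>v (Kp *\<^sub>v yp x t)" if "x \<in> carrier_vec n" for x t
    unfolding yp_def Mp_def by (rule closed_loop_step[OF A B Kp that])
  define g where "g x t = cform Kp (yp x t) (yp x t) + Dd (yp x t)" for x t
  have tel: "q x = (\<Sum>t<N. g x t) + q (yp x N)" if x: "x \<in> carrier_vec n" for x N
  proof -
    have "q (yp x t) = g x t + q (yp x (Suc t))" for t
      unfolding g_def ypS[OF x] using step[OF ypc[OF x]] by simp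
    from telescope[of "\<lambda>t. q (yp x t)", OF this] show ?thesis using yp0[OF x] by simp
  qed
  have decay: "(\<lambda>t. (Mp ^\<^sub>m t *\<^sub>v x) $ i) \<longlonglongrightarrow> 0" if x: "x \<in> carrier_vec n" and i: "i < n" for x i
  proof -
    have b: "(\<Sum>t<N. yp x t \<bullet> yp x t) \<le> q x" for N
    proof -
      have "(\<Sum>t<N. yp x t \<bullet> yp x t) \<le> (\<Sum>t<N. g x t)"
      proof (intro sum_mono)
        fix t
        show "yp x t \<bullet> yp x t \<le> g x t" unfolding g_def cform_def
          using Dd_nn[OF ypc[OF x, of t]] sq_nonneg_vec[of "Kp *\<^sub>v yp x t"] by linarith
      qed
      also have "\<dots> \<le> q x" using tel[OF x, of N] Ppsd[OF ypc[OF x, of N]] unfolding q_def by linarith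
      finally show ?thesis .
    qed
    have "summable (\<lambda>t. yp x t \<bullet> yp x t)"
      by (rule summableI_nonneg_bounded[OF sq_nonneg_vec b])
    hence "(\<lambda>t. yp x t \<bullet> yp x t) \<longlonglongrightarrow> 0" by (rule summable_LIMSEQ_zero)
    from sq_to_comp[OF ypc[OF x] this i] show ?thesis unfolding yp_def .
  qed
  have stp: "stabilizing A B Kp" unfolding stabilizing_def
  proof
    show "Kp \<in> carrier_mat (dim_col B) (dim_row A)" using Kp A B by auto
    show "spectral_radius (map_mat complex_of_real (closed_loop A B Kp)) < 1"
      unfolding Mp_def[symmetric] by (rule decay_stable[OF Mp n decay])
  qed
  have eqK: "K *\<^sub>v x = Kp *\<^sub>v x" if x: "x \<in> carrier_vec n" for x
  proof -
    have vd: "vdec n (yp x)" unfolding yp_def Mp_def by (rule stabilizing_vdec[OF A B stp x])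
    have ql: "(\<lambda>N. q (yp x N)) \<longlonglongrightarrow> 0" unfolding q_def
      by (rule q_tendsto[OF Pc ypc[OF x] vdec_tendsto[OF vd]])
    have "(\<lambda>N. \<Sum>t<N. g x t) \<longlonglongrightarrow> q x - 0"
    proof -
      have "(\<lambda>N. q x - q (yp x N)) \<longlonglongrightarrow> q x - 0" by (intro tendsto_diff tendsto_const ql)
      moreover have "(\<Sum>t<N. g x t) = q x - q (yp x N)" for N using tel[OF x, of N] by simp
      ultimately show ?thesis by simp
    qed
    hence gs: "g x sums q x" unfolding sums_def by simp
    define c where "c t = cform Kp (yp x t) (yp x t)" for t
    have cs: "summable c" and csum: "suminf c = lq_cost A B (1\<^sub>m n) Kp x"
    proof -
      have Kpc: "Kp \<in> carrier_mat k n" by (rule Kp)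
      have "c t = cterm (1\<^sub>m n) Kp (yp x t)" for t unfolding c_def using cterm_cform[OF ypc[OF x]] by simp
      hence ce: "c = (\<lambda>t. cterm (1\<^sub>m n) Kp (yp x t))" by auto
      show "summable c" unfolding ce by (rule gdec_summable[OF cterm_gdec[OF vd _ Kpc]], auto)
      show "suminf c = lq_cost A B (1\<^sub>m n) Kp x" unfolding ce lq_cost_alt yp_def Mp_def ..
    qed
    have Ds: "(\<lambda>t. Dd (yp x t)) sums (q x - lq_cost A B (1\<^sub>m n) Kp x)"
    proof -
      have "(\<lambda>t. g x t - c t) sums (q x - suminf c)" by (intro sums_diff gs summable_sums cs)
      moreover have "g x t - c t = Dd (yp x t)" for t unfolding g_def c_def by simp
      ultimately show ?thesis using csum by simp
    qed
    have "Dd (yp x 0) \<le> q x - lq_cost A B (1\<^sub>m n) Kp x"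
    proof -
      have "sum (\<lambda>t. Dd (yp x t)) {0} \<le> suminf (\<lambda>t. Dd (yp x t))"
        by (rule sum_le_suminf[OF sums_summable[OF Ds]], insert Dd_nn ypc[OF x], auto)
      thus ?thesis using sums_unique[OF Ds] by simp
    qed
    moreover have "lq_cost A B (1\<^sub>m n) K x \<le> lq_cost A B (1\<^sub>m n) Kp x"
      using opt stp x A unfolding optimal_gain_def by auto
    moreover have "q x = lq_cost A B (1\<^sub>m n) K x" unfolding q_def using PV[OF x] by simp
    ultimately have "Dd x \<le> 0" using yp0[OF x] by simp
    hence z: "(K *\<^sub>v x - Kp *\<^sub>v x) \<bullet> (K *\<^sub>v x - Kp *\<^sub>v x) = 0"
      using Dd_ge[OF x] sq_nonneg_vec[of "K *\<^sub>v x - Kp *\<^sub>v x"] by linarith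
    have "K *\<^sub>v x - Kp *\<^sub>v x = 0\<^sub>v k" by (rule sq_zero_vec[OF _ z], insert K Kp x, auto)
    thus ?thesis by (rule vec_diff_zero, insert K Kp x, auto)
  qed
  have "K = Kp" by (rule mat_eq_by_vec[OF K Kp eqK])
  thus ?thesis using that P PV fc by blast
qed




lemma cos:
  fixes A B K P :: "real mat"
  assumes A: "A \<in> carrier_mat n n" and B: "B \<in> carrier_mat n k" and P: "symP n P"
    and Ppsd: "\<And>y. y \<in> carrier_vec n \<Longrightarrow> y \<bullet> (P *\<^sub>v y) \<ge> 0"
    and K: "K \<in> carrier_mat k n" and fc: "fixcond A B P K n k"
    and bell: "\<And>y. y \<in> carrier_vec n \<Longrightarrow> y \<bullet> (P *\<^sub>v y) = cform K y y + 
        (A *\<^sub>v y + B *\<^sub>v (K *\<^sub>v y)) \<bullet> (P *\<^sub>v (A *\<^sub>v y + B *\<^sub>v (K *\<^sub>v y)))"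
    and w: "\<And>t. w t \<in> carrier_vec n" and u: "\<And>t. u t \<in> carrier_vec k"
    and ws: "\<And>t. w (Suc t) = A *\<^sub>v w t + B *\<^sub>v u t"
    and sm: "summable (\<lambda>t. w t \<bullet> w t + u t \<bullet> u t)"
    and wl: "\<And>i. i < n \<Longrightarrow> (\<lambda>t. w t $ i) \<longlonglongrightarrow> 0"
  shows "(\<Sum>t. w t \<bullet> w t + u t \<bullet> u t) \<ge> w 0 \<bullet> (P *\<^sub>v w 0) + (u 0 - K *\<^sub>v w 0) \<bullet> (u 0 - K *\<^sub>v w 0)"
proof -
  have Pc: "P \<in> carrier_mat n n" using P unfolding symP_def by auto
  define q where "q y = y \<bullet> (P *\<^sub>v y)" for y
  define h where "h t = w t \<bullet> w t + u t \<bullet> u t" for t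
  define v where "v t = u t - K *\<^sub>v w t" for t
  define e where "e t = v t \<bullet> v t + q (B *\<^sub>v v t)" for t
  have vc: "v t \<in> carrier_vec k" for t unfolding v_def using u K w by auto
  have e_ge: "e t \<ge> v t \<bullet> v t" for t unfolding e_def q_def using Ppsd[of "B *\<^sub>v v t"] B vc[of t] by auto
  have e_nn: "e t \<ge> 0" for t using e_ge[of t] sq_nonneg_vec[of "v t"] by linarith
  have stp: "q (w t) = (h t - e t) + q (w (Suc t))" for t
  proof -
    have i: "u t \<bullet> u t + q (A *\<^sub>v w t + B *\<^sub>v u t) = (K *\<^sub>v w t) \<bullet> (K *\<^sub>v w t) 
       + q (A *\<^sub>v w t + B *\<^sub>v (K *\<^sub>v w t)) + e t"
      using ID[OF A B P K fc w[of t] u[of t]] unfolding q_def e_def v_def by linarith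
    have b: "q (w t) = w t \<bullet> w t + (K *\<^sub>v w t) \<bullet> (K *\<^sub>v w t) + q (A *\<^sub>v w t + B *\<^sub>v (K *\<^sub>v w t))"
      using bell[OF w[of t]] unfolding q_def cform_def by simp
    show ?thesis unfolding ws h_def using i b by linarith
  qed
  have tel: "q (w 0) = (\<Sum>t<N. h t - e t) + q (w N)" for N
    by (rule telescope, rule stp)
  have ql: "(\<lambda>N. q (w N)) \<longlonglongrightarrow> 0" unfolding q_def by (rule q_tendsto[OF Pc w wl])
  have hs: "h sums suminf h" using sm unfolding h_def by (simp add: summable_sums)
  have "(\<lambda>N. (\<Sum>t<N. h t) - q (w 0) + q (w N)) \<longlonglongrightarrow> suminf h - q (w 0) + 0"
    using hs unfolding sums_def by (intro tendsto_add tendsto_diff tendsto_const ql)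
  moreover have "(\<Sum>t<N. e t) = (\<Sum>t<N. h t) - q (w 0) + q (w N)" for N
    using tel[of N] by (simp add: sum_subtractf)
  ultimately have es: "e sums (suminf h - q (w 0))" unfolding sums_def by simp
  have "sum e {0} \<le> suminf e" by (rule sum_le_suminf[OF sums_summable[OF es]], insert e_nn, auto)
  hence "e 0 \<le> suminf h - q (w 0)" using sums_unique[OF es] by simp
  thus ?thesis using e_ge[of 0] unfolding h_def q_def v_def by linarith
qed




primrec traj :: "real mat \<Rightarrow> real mat \<Rightarrow> real vec \<Rightarrow> (nat \<Rightarrow> real vec) \<Rightarrow> nat \<Rightarrow> real vec" where
  "traj A B x u 0 = x"
| "traj A B x u (Suc t) = A *\<^sub>v traj A B x u t + B *\<^sub>v u t"

lemma traj_carrier: "A \<in> carrier_mat n n \<Longrightarrow> B \<in> carrier_mat n k \<Longrightarrow> x \<in> carrier_vec n \<Longrightarrow>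
   (\<And>t. u t \<in> carrier_vec k) \<Longrightarrow> traj A B x u t \<in> carrier_vec n"
  by (induction t, auto)

lemma split_sq:
  assumes a: "(a :: real vec) \<in> carrier_vec d" and b: "b \<in> carrier_vec d" and m: "m \<le> d"
    and ag: "\<And>i. i < m \<Longrightarrow> a $ i = b $ i"
  shows "a \<bullet> a - b \<bullet> b = (\<Sum>i\<in>{m..<d}. (a $ i)^2 - (b $ i)^2)"
proof -
  have "a \<bullet> a - b \<bullet> b = (\<Sum>i\<in>{0..<d}. (a $ i)^2 - (b $ i)^2)"
    using a b by (simp add: scalar_prod_def sum_subtractf power2_eq_square)
  also have "\<dots> = (\<Sum>i\<in>{0..<m}. (a $ i)^2 - (b $ i)^2) + (\<Sum>i\<in>{m..<d}. (a $ i)^2 - (b $ i)^2)"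
    by (rule sum.atLeastLessThan_concat[symmetric], insert m, auto)
  also have "(\<Sum>i\<in>{0..<m}. (a $ i)^2 - (b $ i)^2) = 0" using ag by simp
  finally show ?thesis by simp
qed

locale blk =
  fixes A A' B :: "real mat" and d k m1 m2 :: nat
  assumes A: "A \<in> carrier_mat d d" and A': "A' \<in> carrier_mat d d" and B: "B \<in> carrier_mat d k"
    and m12: "m1 \<le> m2" and m2d: "m2 \<le> d" and dpos: "d > 0"
    and lowA: "\<And>i j. m1 \<le> i \<Longrightarrow> i < d \<Longrightarrow> j < m1 \<Longrightarrow> A $$ (i,j) = 0"
    and lowA': "\<And>i j. m1 \<le> i \<Longrightarrow> i < d \<Longrightarrow> j < m1 \<Longrightarrow> A' $$ (i,j) = 0"
    and lowB: "\<And>i j. m1 \<le> i \<Longrightarrow> i < d \<Longrightarrow> j < k \<Longrightarrow> B $$ (i,j) = 0"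
    and upA: "\<And>i j. i < m2 \<Longrightarrow> m2 \<le> j \<Longrightarrow> j < d \<Longrightarrow> A $$ (i,j) = 0"
    and upA': "\<And>i j. i < m2 \<Longrightarrow> m2 \<le> j \<Longrightarrow> j < d \<Longrightarrow> A' $$ (i,j) = 0"
    and agree: "\<And>i j. i < m2 \<Longrightarrow> j < d \<Longrightarrow> A $$ (i,j) = A' $$ (i,j)"
begin

lemma swap: "blk A' A B d k m1 m2"
  by (unfold_locales, insert A A' B m12 m2d dpos lowA lowA' lowB upA upA' agree, auto)

lemma cl_low:
  assumes st: "stabilizing A B K" and x: "x \<in> carrier_vec d" and i: "m1 \<le> i" "i < d"
  shows "(closed_loop A B K ^\<^sub>m t *\<^sub>v x) $ i = (A ^\<^sub>m t *\<^sub>v x) $ i"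
proof -
  have K: "K \<in> carrier_mat k d" using st A B unfolding stabilizing_def by auto
  have M: "closed_loop A B K \<in> carrier_mat d d" by (rule closed_loop_carrier[OF A B K])
  show ?thesis
    by (rule traj_low[where w = "\<lambda>t. closed_loop A B K ^\<^sub>m t *\<^sub>v x" and 
         u = "\<lambda>t. K *\<^sub>v (closed_loop A B K ^\<^sub>m t *\<^sub>v x)", OF A B lowA lowB _ _ closed_loop_step[OF A B K x] x _ i],
        insert M x K, auto)
qed

lemma traj_low':
  assumes x: "x \<in> carrier_vec d" and u: "\<And>t. u t \<in> carrier_vec k" and i: "m1 \<le> i" "i < d"
  shows "traj A B x u t $ i = (A ^\<^sub>m t *\<^sub>v x) $ i"
  by (rule traj_low[OF A B lowA lowB traj_carrier[OF A B x u] u _ x _ i], insert x, auto)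

lemma gdec_Apow:
  assumes st: "stabilizing A B K" and x: "x \<in> carrier_vec d" and i: "m1 \<le> i" "i < d"
  shows "gdec (\<lambda>t. (A ^\<^sub>m t *\<^sub>v x) $ i)"
  using stabilizing_vdec[OF A B st x] i cl_low[OF st x i] unfolding vdec_def by auto

lemma Apow_supp:
  assumes x: "x \<in> carrier_vec d" and z: "\<And>i. i < m2 \<Longrightarrow> x $ i = 0" and i: "i < m2"
  shows "(A ^\<^sub>m t *\<^sub>v x) $ i = 0"
proof -
  have "\<forall>j<m2. (A ^\<^sub>m t *\<^sub>v x) $ j = (0\<^sub>v d :: real vec) $ j"
  proof (rule traj_up[OF A A B upA _ m2d, where u = "\<lambda>t. 0\<^sub>v k" and u' = "\<lambda>t. 0\<^sub>v k" and w' = "\<lambda>t. 0\<^sub>v d"])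
    show "\<And>t. A ^\<^sub>m Suc t *\<^sub>v x = A *\<^sub>v (A ^\<^sub>m t *\<^sub>v x) + B *\<^sub>v 0\<^sub>v k"
      using pow_Suc_vec[OF A x] A B x by auto
    show "\<And>t. (0\<^sub>v d :: real vec) = A *\<^sub>v 0\<^sub>v d + B *\<^sub>v 0\<^sub>v k" using A B by auto
  qed (insert A x z m2d, auto)
  thus ?thesis using i m2d by auto
qed

definition rr :: "real vec \<Rightarrow> real vec \<Rightarrow> nat \<Rightarrow> real" where
  "rr a b t = (\<Sum>i\<in>{m1..<d}. ((A ^\<^sub>m t *\<^sub>v a) $ i)^2 - ((A ^\<^sub>m t *\<^sub>v b) $ i)^2)"

lemma rr_summable:
  assumes st: "stabilizing A B K" and a: "a \<in> carrier_vec d" and b: "b \<in> carrier_vec d"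
  shows "summable (rr a b)"
proof -
  have "gdec (rr a b)" unfolding rr_def power2_eq_square
    by (intro gdec_sum gdec_diff gdec_mult gdec_Apow[OF st a] gdec_Apow[OF st b], auto)
  thus ?thesis by (rule gdec_summable)
qed

lemma pair_ineq:
  fixes P K :: "real mat"
  assumes st: "stabilizing A B K" and P: "symP d P"
    and Ppsd: "\<And>y. y \<in> carrier_vec d \<Longrightarrow> y \<bullet> (P *\<^sub>v y) \<ge> 0"
    and fc: "fixcond A B P K d k"
    and PV: "\<And>y. y \<in> carrier_vec d \<Longrightarrow> lq_cost A B (1\<^sub>m d) K y = y \<bullet> (P *\<^sub>v y)"
    and a: "a \<in> carrier_vec d" and b: "b \<in> carrier_vec d" and ag: "\<And>i. i < m2 \<Longrightarrow> a $ i = b $ i"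
  shows "b \<bullet> (P *\<^sub>v b) + suminf (rr a b) \<ge> a \<bullet> (P *\<^sub>v a) + (K *\<^sub>v b - K *\<^sub>v a) \<bullet> (K *\<^sub>v b - K *\<^sub>v a)"
proof -
  have Kc: "K \<in> carrier_mat k d" using st A B unfolding stabilizing_def by auto
  define M where "M = closed_loop A B K"
  have M: "M \<in> carrier_mat d d" unfolding M_def by (rule closed_loop_carrier[OF A B Kc])
  have bell: "y \<bullet> (P *\<^sub>v y) = cform K y y + 
        (A *\<^sub>v y + B *\<^sub>v (K *\<^sub>v y)) \<bullet> (P *\<^sub>v (A *\<^sub>v y + B *\<^sub>v (K *\<^sub>v y)))" if y: "y \<in> carrier_vec d" for y
  proof -
    have c: "A *\<^sub>v y + B *\<^sub>v (K *\<^sub>v y) \<in> carrier_vec d" using A B Kc y by auto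
    show ?thesis using lq_cost_bellman[OF A B st y] PV[OF y] PV[OF c] by simp
  qed
  define \<delta> where "\<delta> = a - b"
  have \<delta>c: "\<delta> \<in> carrier_vec d" unfolding \<delta>_def using a b by auto
  have \<delta>z: "\<delta> $ i = 0" if "i < m2" for i unfolding \<delta>_def using ag[OF that] that m2d b by auto
  define y2 where "y2 t = M ^\<^sub>m t *\<^sub>v b" for t
  have vy2: "vdec d y2" unfolding y2_def M_def by (rule stabilizing_vdec[OF A B st b])
  have y2c: "y2 t \<in> carrier_vec d" for t using vdec_carrier[OF vy2] .
  define u where "u t = K *\<^sub>v y2 t" for t
  have vu: "vdec k u" unfolding u_def by (rule vdec_mult[OF Kc vy2])
  have uc: "u t \<in> carrier_vec k" for t using vdec_carrier[OF vu] .
  define z where "z t = A ^\<^sub>m t *\<^sub>v \<delta>" for t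
  have zc: "z t \<in> carrier_vec d" for t unfolding z_def using A \<delta>c by simp
  have vz: "vdec d z" unfolding vdec_def
  proof (intro conjI allI impI)
    fix t show "z t \<in> carrier_vec d" by (rule zc)
  next
    fix i assume i: "i < d"
    show "gdec (\<lambda>t. z t $ i)"
    proof (cases "i < m2")
      case True
      have "z t $ i = 0" for t unfolding z_def using Apow_supp[OF \<delta>c \<delta>z True] by simp
      thus ?thesis by simp
    next
      case False
      thus ?thesis unfolding z_def using gdec_Apow[OF st \<delta>c _ i] m12 by auto
    qed
  qed
  define w where "w t = y2 t + z t" for t
  have vw: "vdec d w" unfolding w_def by (rule vdec_add[OF vy2 vz])
  have wc: "w t \<in> carrier_vec d" for t using vdec_carrier[OF vw] .
  have ws: "w (Suc t) = A *\<^sub>v w t + B *\<^sub>v u t" for t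
  proof -
    have y2S: "y2 (Suc t) = A *\<^sub>v y2 t + B *\<^sub>v u t" unfolding y2_def u_def M_def
      by (rule closed_loop_step[OF A B Kc b])
    have zS: "z (Suc t) = A *\<^sub>v z t" unfolding z_def by (rule pow_Suc_vec[OF A \<delta>c])
    have "w (Suc t) = (A *\<^sub>v y2 t + B *\<^sub>v u t) + A *\<^sub>v z t" unfolding w_def y2S zS ..
    also have "\<dots> = (A *\<^sub>v y2 t + A *\<^sub>v z t) + B *\<^sub>v u t"
      by (rule eq_vecI, insert A B y2c[of t] zc[of t] uc[of t], auto)
    also have "A *\<^sub>v y2 t + A *\<^sub>v z t = A *\<^sub>v w t" unfolding w_def
      by (rule mult_add_distrib_mat_vec[symmetric, OF A y2c zc])
    finally show ?thesis .
  qed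
  have y20: "y2 0 = b" unfolding y2_def using M b by simp
  have w0: "w 0 = a" unfolding w_def y20 z_def \<delta>_def using a b A
    by (intro eq_vecI, auto)
  have sm: "summable (\<lambda>t. w t \<bullet> w t + u t \<bullet> u t)"
    by (rule gdec_summable, intro gdec_add vdec_scalar[OF vw vw] vdec_scalar[OF vu vu])
  have main: "(\<Sum>t. w t \<bullet> w t + u t \<bullet> u t) \<ge> w 0 \<bullet> (P *\<^sub>v w 0) + (u 0 - K *\<^sub>v w 0) \<bullet> (u 0 - K *\<^sub>v w 0)"
    by (rule cos[OF A B P Ppsd Kc fc bell wc uc ws sm vdec_tendsto[OF vw]])
  have hsplit: "w t \<bullet> w t + u t \<bullet> u t = cform K (y2 t) (y2 t) + rr a b t" for t
  proof -
    have "w t \<bullet> w t - y2 t \<bullet> y2 t = (\<Sum>i\<in>{m1..<d}. (w t $ i)^2 - (y2 t $ i)^2)"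
    proof (rule split_sq[OF wc y2c, of m1])
      show "m1 \<le> d" using m12 m2d by simp
      fix i assume i: "i < m1"
      have i2: "i < m2" using i m12 by linarith
      have "z t $ i = 0" unfolding z_def using Apow_supp[OF \<delta>c \<delta>z i2] by simp
      thus "w t $ i = y2 t $ i" unfolding w_def using i m12 m2d y2c[of t] zc[of t] by simp
    qed
    also have "\<dots> = rr a b t" unfolding rr_def
    proof (intro sum.cong refl)
      fix i assume i: "i \<in> {m1..<d}"
      have "w t $ i = (A ^\<^sub>m t *\<^sub>v a) $ i"
        by (rule traj_low[where w = w and u = u, OF A B lowA lowB wc uc ws a], insert w0 i, auto)
      moreover have "y2 t $ i = (A ^\<^sub>m t *\<^sub>v b) $ i" unfolding y2_def M_def
        by (rule cl_low[OF st b], insert i, auto)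
      ultimately show "(w t $ i)^2 - (y2 t $ i)^2 = ((A ^\<^sub>m t *\<^sub>v a) $ i)^2 - ((A ^\<^sub>m t *\<^sub>v b) $ i)^2" by simp
    qed
    finally show ?thesis unfolding cform_def u_def by linarith
  qed
  have cs: "summable (\<lambda>t. cform K (y2 t) (y2 t))"
  proof -
    have "cform K (y2 t) (y2 t) = cterm (1\<^sub>m d) K (y2 t)" for t using cterm_cform[OF y2c] by simp
    thus ?thesis using gdec_summable[OF cterm_gdec[OF vy2 _ Kc]] by simp
  qed
  have csum: "(\<Sum>t. cform K (y2 t) (y2 t)) = b \<bullet> (P *\<^sub>v b)"
  proof -
    have "cform K (y2 t) (y2 t) = cterm (1\<^sub>m d) K (y2 t)" for t using cterm_cform[OF y2c] by simp
    hence "(\<Sum>t. cform K (y2 t) (y2 t)) = lq_cost A B (1\<^sub>m d) K b"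
      unfolding lq_cost_alt y2_def M_def by simp
    thus ?thesis using PV[OF b] by simp
  qed
  have "(\<Sum>t. w t \<bullet> w t + u t \<bullet> u t) = (\<Sum>t. cform K (y2 t) (y2 t)) + suminf (rr a b)"
    unfolding hsplit by (rule suminf_add[OF cs rr_summable[OF st a b], symmetric])
  thus ?thesis using main w0 unfolding csum u_def y20 by simp
qed

lemma K_low_only:
  assumes opt: "optimal_gain A B (1\<^sub>m d) K"
    and a: "a \<in> carrier_vec d" and b: "b \<in> carrier_vec d" and ag: "\<And>i. i < m2 \<Longrightarrow> a $ i = b $ i"
  shows "K *\<^sub>v a = K *\<^sub>v b"
proof -
  have st: "stabilizing A B K" using opt unfolding optimal_gain_def by auto
  have Kc: "K \<in> carrier_mat k d" using st A B unfolding stabilizing_def by auto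
  obtain P where P: "symP d P" and PV: "\<And>x. x \<in> carrier_vec d \<Longrightarrow> lq_cost A B (1\<^sub>m d) K x = x \<bullet> (P *\<^sub>v x)"
    and fc: "fixcond A B P K d k"
    using opt_fixcond[OF A B dpos opt] by blast
  have Ppsd: "y \<bullet> (P *\<^sub>v y) \<ge> 0" if "y \<in> carrier_vec d" for y
    using lq_cost_nonneg[OF A B st that] PV[OF that] by simp
  have 1: "b \<bullet> (P *\<^sub>v b) + suminf (rr a b) \<ge> a \<bullet> (P *\<^sub>v a) + (K *\<^sub>v b - K *\<^sub>v a) \<bullet> (K *\<^sub>v b - K *\<^sub>v a)"
    by (rule pair_ineq[OF st P Ppsd fc PV a b ag])
  have 2: "a \<bullet> (P *\<^sub>v a) + suminf (rr b a) \<ge> b \<bullet> (P *\<^sub>v b) + (K *\<^sub>v a - K *\<^sub>v b) \<bullet> (K *\<^sub>v a - K *\<^sub>v b)"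
    by (rule pair_ineq[OF st P Ppsd fc PV b a], insert ag, auto)
  have "rr b a = (\<lambda>t. - rr a b t)" unfolding rr_def by (auto simp: sum_negf[symmetric])
  hence 3: "suminf (rr b a) = - suminf (rr a b)" using suminf_minus[OF rr_summable[OF st a b]] by simp
  have 4: "(K *\<^sub>v a - K *\<^sub>v b) \<bullet> (K *\<^sub>v a - K *\<^sub>v b) \<ge> 0" by (rule sq_nonneg_vec)
  have "(K *\<^sub>v b - K *\<^sub>v a) \<bullet> (K *\<^sub>v b - K *\<^sub>v a) = 0"
    using 1 2 3 4 sq_nonneg_vec[of "K *\<^sub>v b - K *\<^sub>v a"] by linarith
  from sq_zero_vec[OF _ this] have "K *\<^sub>v b - K *\<^sub>v a = 0\<^sub>v k" using Kc a b by auto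
  from vec_diff_zero[OF this] show ?thesis using Kc a b by auto
qed

lemma opt_transfer:
  assumes opt: "optimal_gain A B (1\<^sub>m d) K" and stA': "stabilizable A' B"
  shows "optimal_gain A' B (1\<^sub>m d) K"
proof -
  interpret sw: blk A' A B d k m1 m2 by (rule swap)
  have st: "stabilizing A B K" using opt unfolding optimal_gain_def by auto
  have Kc: "K \<in> carrier_mat k d" using st A B unfolding stabilizing_def by auto
  obtain P where P: "symP d P" and PV: "\<And>x. x \<in> carrier_vec d \<Longrightarrow> lq_cost A B (1\<^sub>m d) K x = x \<bullet> (P *\<^sub>v x)"
    and fc: "fixcond A B P K d k"
    using opt_fixcond[OF A B dpos opt] by blast
  have Ppsd: "y \<bullet> (P *\<^sub>v y) \<ge> 0" if "y \<in> carrier_vec d" for y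
    using lq_cost_nonneg[OF A B st that] PV[OF that] by simp
  have bell: "y \<bullet> (P *\<^sub>v y) = cform K y y + 
        (A *\<^sub>v y + B *\<^sub>v (K *\<^sub>v y)) \<bullet> (P *\<^sub>v (A *\<^sub>v y + B *\<^sub>v (K *\<^sub>v y)))" if y: "y \<in> carrier_vec d" for y
  proof -
    have c: "A *\<^sub>v y + B *\<^sub>v (K *\<^sub>v y) \<in> carrier_vec d" using A B Kc y by auto
    show ?thesis using lq_cost_bellman[OF A B st y] PV[OF y] PV[OF c] by simp
  qed
  have Klow: "K *\<^sub>v z = K *\<^sub>v z'" if "z \<in> carrier_vec d" "z' \<in> carrier_vec d" "\<forall>j<m2. z $ j = z' $ j" for z z'
    by (rule K_low_only[OF opt that(1,2)], insert that(3), auto)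
  obtain K2 where st2: "stabilizing A' B K2" using stA' unfolding stabilizable_def by auto
  define M where "M = closed_loop A B K"
  define M2 where "M2 = closed_loop A' B K"
  have M: "M \<in> carrier_mat d d" unfolding M_def by (rule closed_loop_carrier[OF A B Kc])
  have M2: "M2 \<in> carrier_mat d d" unfolding M2_def by (rule closed_loop_carrier[OF A' B Kc])
  define y where "y x t = M ^\<^sub>m t *\<^sub>v x" for x t
  define y2 where "y2 x t = M2 ^\<^sub>m t *\<^sub>v x" for x t
  have yc: "y x t \<in> carrier_vec d" if "x \<in> carrier_vec d" for x t unfolding y_def using M that by simp
  have y2c: "y2 x t \<in> carrier_vec d" if "x \<in> carrier_vec d" for x t unfolding y2_def using M2 that by simp
  have yS: "y x (Suc t) = A *\<^sub>v y x t + B *\<^sub>v (K *\<^sub>v y x t)" if "x \<in> carrier_vec d" for x t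
    unfolding y_def M_def by (rule closed_loop_step[OF A B Kc that])
  have y2S: "y2 x (Suc t) = A' *\<^sub>v y2 x t + B *\<^sub>v (K *\<^sub>v y2 x t)" if "x \<in> carrier_vec d" for x t
    unfolding y2_def M2_def by (rule closed_loop_step[OF A' B Kc that])
  have y0: "y x 0 = x" if "x \<in> carrier_vec d" for x unfolding y_def using M that by simp
  have y20: "y2 x 0 = x" if "x \<in> carrier_vec d" for x unfolding y2_def using M2 that by simp
  have yag: "\<forall>j<m2. y x t $ j = y2 x t $ j" if x: "x \<in> carrier_vec d" for x t
    by (rule traj_up[where w = "y x" and u = "\<lambda>t. K *\<^sub>v y x t" and w' = "y2 x" and u' = "\<lambda>t. K *\<^sub>v y2 x t",
          OF A A' B upA agree m2d yc[OF x] _ yS[OF x] y2c[OF x] _ y2S[OF x]],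
        insert Kc yc[OF x] y2c[OF x] Klow y0[OF x] y20[OF x], auto)
  have yhi: "y x t $ i = (A ^\<^sub>m t *\<^sub>v x) $ i" if x: "x \<in> carrier_vec d" and i: "m1 \<le> i" "i < d" for x t i
    by (rule traj_low[where w = "y x" and u = "\<lambda>t. K *\<^sub>v y x t", OF A B lowA lowB yc[OF x] _ yS[OF x] x _ i],
        insert Kc yc[OF x] y0[OF x], auto)
  have y2hi: "y2 x t $ i = (A' ^\<^sub>m t *\<^sub>v x) $ i" if x: "x \<in> carrier_vec d" and i: "m1 \<le> i" "i < d" for x t i
    by (rule traj_low[where w = "y2 x" and u = "\<lambda>t. K *\<^sub>v y2 x t", OF A' B lowA' lowB y2c[OF x] _ y2S[OF x] x _ i],
        insert Kc y2c[OF x] y20[OF x], auto)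
  have vy: "vdec d (y x)" if "x \<in> carrier_vec d" for x unfolding y_def M_def by (rule stabilizing_vdec[OF A B st that])
  have st': "stabilizing A' B K" unfolding stabilizing_def
  proof
    show "K \<in> carrier_mat (dim_col B) (dim_row A')" using Kc A' B by auto
    show "spectral_radius (map_mat complex_of_real (closed_loop A' B K)) < 1"
      unfolding M2_def[symmetric]
    proof (rule decay_stable[OF M2 dpos])
      fix x :: "real vec" and i assume x: "x \<in> carrier_vec d" and i: "i < d"
      show "(\<lambda>t. (M2 ^\<^sub>m t *\<^sub>v x) $ i) \<longlonglongrightarrow> 0"
      proof (cases "i < m2")
        case True
        hence "(M2 ^\<^sub>m t *\<^sub>v x) $ i = y x t $ i" for t using yag[OF x, of t] unfolding y2_def by simp
        thus ?thesis using vdec_tendsto[OF vy[OF x] i] by simp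
      next
        case False
        hence "(M2 ^\<^sub>m t *\<^sub>v x) $ i = (A' ^\<^sub>m t *\<^sub>v x) $ i" for t 
          using y2hi[OF x _ i, of t] m12 unfolding y2_def by simp
        thus ?thesis using gdec_tendsto[OF sw.gdec_Apow[OF st2 x _ i]] False m12 by simp
      qed
    qed
  qed
  show ?thesis unfolding optimal_gain_def
  proof (intro conjI allI impI ballI)
    show "stabilizing A' B K" by (rule st')
    fix K' :: "real mat" and x :: "real vec" assume st3: "stabilizing A' B K'" and x: "x \<in> carrier_vec (dim_row A')"
    from x have x: "x \<in> carrier_vec d" using A' by simp
    have K'c: "K' \<in> carrier_mat k d" using st3 A' B unfolding stabilizing_def by auto
    define M3 where "M3 = closed_loop A' B K'"
    have M3: "M3 \<in> carrier_mat d d" unfolding M3_def by (rule closed_loop_carrier[OF A' B K'c])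
    define y3 where "y3 t = M3 ^\<^sub>m t *\<^sub>v x" for t
    have vy3: "vdec d y3" unfolding y3_def M3_def by (rule stabilizing_vdec[OF A' B st3 x])
    have y3c: "y3 t \<in> carrier_vec d" for t using vdec_carrier[OF vy3] .
    define u where "u t = K' *\<^sub>v y3 t" for t
    have vu: "vdec k u" unfolding u_def by (rule vdec_mult[OF K'c vy3])
    have uc: "u t \<in> carrier_vec k" for t using vdec_carrier[OF vu] .
    have y3S: "y3 (Suc t) = A' *\<^sub>v y3 t + B *\<^sub>v u t" for t
      unfolding y3_def u_def M3_def by (rule closed_loop_step[OF A' B K'c x])
    have y30: "y3 0 = x" unfolding y3_def using M3 x by simp
    define w where "w t = traj A B x u t" for t
    have wc: "w t \<in> carrier_vec d" for t unfolding w_def by (rule traj_carrier[OF A B x uc])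
    have wS: "w (Suc t) = A *\<^sub>v w t + B *\<^sub>v u t" for t unfolding w_def by simp
    have w0: "w 0 = x" unfolding w_def by simp
    have wag: "\<forall>j<m2. w t $ j = y3 t $ j" for t
      by (rule traj_up[where w = w and u = u and w' = y3 and u' = u, OF A A' B upA agree m2d wc uc wS y3c uc y3S],
          insert w0 y30, auto)
    have whi: "w t $ i = (A ^\<^sub>m t *\<^sub>v x) $ i" if "m1 \<le> i" "i < d" for t i
      unfolding w_def by (rule traj_low'[OF x uc that])
    have y3hi: "y3 t $ i = (A' ^\<^sub>m t *\<^sub>v x) $ i" if "m1 \<le> i" "i < d" for t i
      unfolding y3_def M3_def by (rule sw.cl_low[OF st3 x that])
    have vw: "vdec d w" unfolding vdec_def
    proof (intro conjI allI impI)
      fix t show "w t \<in> carrier_vec d" by (rule wc)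
    next
      fix i assume i: "i < d"
      show "gdec (\<lambda>t. w t $ i)"
      proof (cases "i < m2")
        case True
        hence "w t $ i = y3 t $ i" for t using wag[of t] by simp
        thus ?thesis using vy3 i unfolding vdec_def by simp
      next
        case False
        hence "w t $ i = (A ^\<^sub>m t *\<^sub>v x) $ i" for t using whi[of i t] m12 i by simp
        thus ?thesis using gdec_Apow[OF st x _ i] False m12 by simp
      qed
    qed
    have sm: "summable (\<lambda>t. w t \<bullet> w t + u t \<bullet> u t)"
      by (rule gdec_summable, intro gdec_add vdec_scalar[OF vw vw] vdec_scalar[OF vu vu])
    have main: "(\<Sum>t. w t \<bullet> w t + u t \<bullet> u t) \<ge> w 0 \<bullet> (P *\<^sub>v w 0) + (u 0 - K *\<^sub>v w 0) \<bullet> (u 0 - K *\<^sub>v w 0)"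
      by (rule cos[OF A B P Ppsd Kc fc bell wc uc wS sm vdec_tendsto[OF vw]])
    have main2: "(\<Sum>t. w t \<bullet> w t + u t \<bullet> u t) \<ge> x \<bullet> (P *\<^sub>v x)"
      using main sq_nonneg_vec[of "u 0 - K *\<^sub>v w 0"] unfolding w0 by linarith
    define s where "s t = (\<Sum>i\<in>{m2..<d}. ((A ^\<^sub>m t *\<^sub>v x) $ i)^2 - ((A' ^\<^sub>m t *\<^sub>v x) $ i)^2)" for t
    have ss: "summable s"
    proof -
      have "gdec s" unfolding s_def power2_eq_square
        by (intro gdec_sum gdec_diff gdec_mult gdec_Apow[OF st x] sw.gdec_Apow[OF st2 x], insert m12, auto)
      thus ?thesis by (rule gdec_summable)
    qed
    have e1: "w t \<bullet> w t - y3 t \<bullet> y3 t = s t" for t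
    proof -
      have "w t \<bullet> w t - y3 t \<bullet> y3 t = (\<Sum>i\<in>{m2..<d}. (w t $ i)^2 - (y3 t $ i)^2)"
        by (rule split_sq[OF wc y3c m2d], insert wag[of t], auto)
      also have "\<dots> = s t" unfolding s_def 
        by (intro sum.cong refl, insert whi y3hi m12, auto)
      finally show ?thesis .
    qed
    have e2: "y x t \<bullet> y x t - y2 x t \<bullet> y2 x t = s t" for t
    proof -
      have "y x t \<bullet> y x t - y2 x t \<bullet> y2 x t = (\<Sum>i\<in>{m2..<d}. (y x t $ i)^2 - (y2 x t $ i)^2)"
        by (rule split_sq[OF yc[OF x] y2c[OF x] m2d], insert yag[OF x, of t], auto)
      also have "\<dots> = s t" unfolding s_def 
        by (intro sum.cong refl, insert yhi[OF x] y2hi[OF x] m12, auto)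
      finally show ?thesis .
    qed
    have e3: "K *\<^sub>v y x t = K *\<^sub>v y2 x t" for t by (rule Klow[OF yc[OF x] y2c[OF x] yag[OF x]])
    have cy: "cform K (y x t) (y x t) = cterm (1\<^sub>m d) K (y x t)" for t using cterm_cform[OF yc[OF x]] by simp
    have cys: "summable (\<lambda>t. cform K (y x t) (y x t))" 
      unfolding cy by (rule gdec_summable[OF cterm_gdec[OF vy[OF x] _ Kc]], auto)
    have V1: "lq_cost A B (1\<^sub>m d) K x = (\<Sum>t. cform K (y x t) (y x t))"
      unfolding lq_cost_alt using cy unfolding y_def M_def by simp
    have V2: "lq_cost A' B (1\<^sub>m d) K x = (\<Sum>t. cform K (y x t) (y x t) - s t)"
    proof -
      have "cterm (1\<^sub>m d) K (y2 x t) = cform K (y x t) (y x t) - s t" for t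
        using cterm_cform[OF y2c[OF x]] e2[of t] e3[of t] unfolding cform_def by simp
      thus ?thesis unfolding lq_cost_alt y2_def[symmetric] M2_def[symmetric] by simp
    qed
    have V3: "lq_cost A' B (1\<^sub>m d) K' x = (\<Sum>t. (w t \<bullet> w t + u t \<bullet> u t) - s t)"
    proof -
      have "cterm (1\<^sub>m d) K' (y3 t) = (w t \<bullet> w t + u t \<bullet> u t) - s t" for t
        using cterm_cform[OF y3c] e1[of t] unfolding cform_def u_def by simp
      thus ?thesis unfolding lq_cost_alt y3_def[symmetric] M3_def[symmetric] by simp
    qed
    have "lq_cost A' B (1\<^sub>m d) K x = lq_cost A B (1\<^sub>m d) K x - suminf s"
      unfolding V2 V1 by (rule suminf_diff[OF cys ss, symmetric])
    also have "\<dots> = x \<bullet> (P *\<^sub>v x) - suminf s" using PV[OF x] by simp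
    also have "\<dots> \<le> (\<Sum>t. w t \<bullet> w t + u t \<bullet> u t) - suminf s" using main2 by simp
    also have "\<dots> = lq_cost A' B (1\<^sub>m d) K' x" unfolding V3 by (rule suminf_diff[OF sm ss])
    finally show "lq_cost A' B (1\<^sub>m d) K x \<le> lq_cost A' B (1\<^sub>m d) K' x" .
  qed
qed

lemma opt_equiv:
  assumes "stabilizable A B" "stabilizable A' B"
  shows "optimal_gain A B (1\<^sub>m d) = optimal_gain A' B (1\<^sub>m d)"
proof (intro ext iffI)
  interpret sw: blk A' A B d k m1 m2 by (rule swap)
  fix K
  show "optimal_gain A B (1\<^sub>m d) K \<Longrightarrow> optimal_gain A' B (1\<^sub>m d) K" by (rule opt_transfer[OF _ assms(2)])
  show "optimal_gain A' B (1\<^sub>m d) K \<Longrightarrow> optimal_gain A B (1\<^sub>m d) K" by (rule sw.opt_transfer[OF _ assms(1)])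
qed

end



theorem theorem1:
  fixes sc se s3 du :: nat
    and A1 A12 A2 A32 A32' A3 A3' B1 :: "real mat"
  assumes A1: "A1 \<in> carrier_mat sc sc"
    and A12: "A12 \<in> carrier_mat sc se"
    and A2: "A2 \<in> carrier_mat se se"
    and A32: "A32 \<in> carrier_mat s3 se"
    and A32': "A32' \<in> carrier_mat s3 se"
    and A3: "A3 \<in> carrier_mat s3 s3"
    and A3': "A3' \<in> carrier_mat s3 s3"
    and B1: "B1 \<in> carrier_mat sc du"
  shows
    "(\<forall>I1p :: real mat.
        I1p \<in> carrier_mat (sc + se + s3) (sc + se + s3) \<and>
        (\<forall>i < sc + se + s3. \<forall>j < sc + se + s3. i \<noteq> j \<longrightarrow> I1p $$ (i, j) = 0) \<and>
        (\<forall>i < sc. I1p $$ (i, i) = 1) \<and>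
        (\<forall>i < sc + se + s3. I1p $$ (i, i) \<in> {0, 1}) \<and>
        stabilizable (pc_A sc se s3 A1 A12 A2 A32 A3) (pc_B sc se s3 du B1)
        \<longrightarrow>
        Kstar (pc_A sc se s3 A1 A12 A2 A32 A3) (pc_B sc se s3 du B1) (1\<^sub>m (sc + se + s3)) =
        Kstar (pc_A sc se s3 A1 A12 A2 A32 A3) (pc_B sc se s3 du B1) I1p)
     \<and>
     (stabilizable (pc_A sc se s3 A1 A12 A2 A32 A3) (pc_B sc se s3 du B1) \<and>
      stabilizable (pc_A sc se s3 A1 A12 A2 A32' A3') (pc_B sc se s3 du B1)
      \<longrightarrow>
      Kstar (pc_A sc se s3 A1 A12 A2 A32 A3) (pc_B sc se s3 du B1) (1\<^sub>m (sc + se + s3)) =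
      Kstar (pc_A sc se s3 A1 A12 A2 A32' A3') (pc_B sc se s3 du B1) (1\<^sub>m (sc + se + s3)))"
proof (intro conjI allI impI)
  fix I1p :: "real mat"
  assume h: "I1p \<in> carrier_mat (sc + se + s3) (sc + se + s3) \<and>
        (\<forall>i < sc + se + s3. \<forall>j < sc + se + s3. i \<noteq> j \<longrightarrow> I1p $$ (i, j) = 0) \<and>
        (\<forall>i < sc. I1p $$ (i, i) = 1) \<and>
        (\<forall>i < sc + se + s3. I1p $$ (i, i) \<in> {0, 1}) \<and>
        stabilizable (pc_A sc se s3 A1 A12 A2 A32 A3) (pc_B sc se s3 du B1)"
  have "optimal_gain (pc_A sc se s3 A1 A12 A2 A32 A3) (pc_B sc se s3 du B1) (1\<^sub>m (sc + se + s3)) =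
        optimal_gain (pc_A sc se s3 A1 A12 A2 A32 A3) (pc_B sc se s3 du B1) I1p"
    by (rule ext, rule part1_opt[OF refl refl], insert h, auto)
  thus "Kstar (pc_A sc se s3 A1 A12 A2 A32 A3) (pc_B sc se s3 du B1) (1\<^sub>m (sc + se + s3)) =
        Kstar (pc_A sc se s3 A1 A12 A2 A32 A3) (pc_B sc se s3 du B1) I1p"
    unfolding Kstar_def by simp
next
  assume h: "stabilizable (pc_A sc se s3 A1 A12 A2 A32 A3) (pc_B sc se s3 du B1) \<and>
      stabilizable (pc_A sc se s3 A1 A12 A2 A32' A3') (pc_B sc se s3 du B1)"
  show "Kstar (pc_A sc se s3 A1 A12 A2 A32 A3) (pc_B sc se s3 du B1) (1\<^sub>m (sc + se + s3)) =
      Kstar (pc_A sc se s3 A1 A12 A2 A32' A3') (pc_B sc se s3 du B1) (1\<^sub>m (sc + se + s3))"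
  proof (cases "sc + se + s3 = 0")
    case True
    have "pc_A sc se s3 A1 A12 A2 A32 A3 = pc_A sc se s3 A1 A12 A2 A32' A3'"
      unfolding pc_A_def using True by (intro eq_matI, auto)
    thus ?thesis by simp
  next
    case False
    have bl: "blk (pc_A sc se s3 A1 A12 A2 A32 A3) (pc_A sc se s3 A1 A12 A2 A32' A3') (pc_B sc se s3 du B1)
        (sc + se + s3) du sc (sc + se)"
    proof (unfold_locales)
      show "sc + se + s3 > 0" using False by simp
    qed (auto simp: pcA_carrier pcB_carrier pcA_low pcB_low pcA_up pcA_agree[of _ sc se _ s3 A1 A12 A2 A32 A3 A32' A3'])
    have "optimal_gain (pc_A sc se s3 A1 A12 A2 A32 A3) (pc_B sc se s3 du B1) (1\<^sub>m (sc + se + s3)) =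
        optimal_gain (pc_A sc se s3 A1 A12 A2 A32' A3') (pc_B sc se s3 du B1) (1\<^sub>m (sc + se + s3))"
      by (rule blk.opt_equiv[OF bl], insert h, auto)
    thus ?thesis unfolding Kstar_def by simp
  qed
qed

end
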